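(* Let $g\in L^2(I;L^2(\Omega))$ and let $z_{kh}\in X^0_{kh}$ satisfy $B(\varphi_{kh},z_{kh})=(g,\varphi_{kh})_I$ for all $\varphi_{kh}\in X^0_{kh}$. For $w\in X_{kh}(\Gamma)$ the following are equivalent: (A) $\int_{\Sigma_T}w\,\phi_{kh}\,ds\,dt=-\int_{\Omega_T}g\,p_{kh}(\phi_{kh})\,dx\,dt$ for all $\phi_{kh}\in X_{kh}(\Gamma)$, where $p_{kh}(\phi_{kh})\in X_{kh}$ solves $B(p_{kh}(\phi_{kh}),\varphi_{kh})=0$ for all $\varphi_{kh}\in X^0_{kh}$ and $p_{kh}(\phi_{kh})|_{\Sigma_T}=\phi_{kh}$; (B) $\int_{\Sigma_T}w\,\Phi_{kh}\,ds\,dt=B(\Phi_{kh},z_{kh})-\int_{\Omega_T}g\,\Phi_{kh}\,dx\,dt$ for all $\Phi_{kh}\in X_{kh}$.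
   Context: $\Omega\subset\mathbb{R}^N$ ($N=2,3$) is a bounded convex polytope, $\Gamma=\partial\Omega$, $T>0$, $I=(0,T)$, $\Omega_T=I\times\Omega$, $\Sigma_T=I\times\Gamma$; $(\cdot,\cdot)_I$ is the $L^2(I;L^2(\Omega))$ inner product. Time mesh $0=t_0<\dots<t_M=T$, $I_m=(t_{m-1},t_m]$, $k_m=t_m-t_{m-1}$. Space: a shape-regular simplicial triangulation of $\Omega$, $V_h$ continuous piecewise linear functions, $V_h^0=V_h\cap H^1_0(\Omega)$, $V_h(\Gamma)=\{v|_\Gamma:v\in V_h\}$. $X_{kh}$, $X^0_{kh}$, $X_{kh}(\Gamma)$: functions on $I$ constant on each $I_m$ with values in $V_h$, $V^0_h$, $V_h(\Gamma)$; $v_m=v|_{I_m}$. $B(v,w)=\sum_{m=1}^Mk_m(\nabla v_m,\nabla w_m)_{L^2(\Omega)}+\sum_{m=2}^M(v_m-v_{m-1},w_m)_{L^2(\Omega)}+(v_1,w_1)_{L^2(\Omega)}$. *)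

theory Defs
  imports "HOL-Analysis.Analysis"
begin

definition triangulation :: "'a::euclidean_space set set \<Rightarrow> 'a set \<Rightarrow> bool" where
  "triangulation Tr \<Omega> \<longleftrightarrow> finite Tr \<and> Tr \<noteq> {}
     \<and> (\<forall>K\<in>Tr. (int DIM('a)) simplex K)
     \<and> \<Union>Tr = closure \<Omega>
     \<and> (\<forall>K\<in>Tr. \<forall>L\<in>Tr. (K \<inter> L) face_of K \<and> (K \<inter> L) face_of L)"

definition Vh :: "'a::euclidean_space set set \<Rightarrow> ('a \<Rightarrow> real) set" where
  "Vh Tr = {v. continuous_on (\<Union>Tr) v
              \<and> (\<forall>K\<in>Tr. \<exists>a b. \<forall>x\<in>K. v x = a \<bullet> x + b)
              \<and> (\<forall>x. x \<notin> \<Union>Tr \<longrightarrow> v x = 0)}"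

text \<open>V_h^0 = V_h intersected with H^1_0: functions of V_h vanishing on the boundary.\<close>
definition Vh0 :: "'a::euclidean_space set set \<Rightarrow> 'a set \<Rightarrow> ('a \<Rightarrow> real) set" where
  "Vh0 Tr \<Omega> = {v \<in> Vh Tr. \<forall>x\<in>frontier \<Omega>. v x = 0}"

definition bdry_restr :: "'a::euclidean_space set \<Rightarrow> ('a \<Rightarrow> real) \<Rightarrow> ('a \<Rightarrow> real)" where
  "bdry_restr \<Omega> v = (\<lambda>x. if x \<in> frontier \<Omega> then v x else 0)"

definition VhG :: "'a::euclidean_space set set \<Rightarrow> 'a set \<Rightarrow> ('a \<Rightarrow> real) set" where
  "VhG Tr \<Omega> = bdry_restr \<Omega> ` Vh Tr"

definition time_mesh :: "(nat \<Rightarrow> real) \<Rightarrow> nat \<Rightarrow> real \<Rightarrow> bool" where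
  "time_mesh tm M T \<longleftrightarrow> M \<ge> 1 \<and> tm 0 = 0 \<and> tm M = T
     \<and> (\<forall>m<M. tm m < tm (Suc m))"

definition pwc :: "(nat \<Rightarrow> real) \<Rightarrow> nat \<Rightarrow> ('a \<Rightarrow> real) set \<Rightarrow> (real \<Rightarrow> 'a \<Rightarrow> real) set" where
  "pwc tm M V = {u. (\<forall>m\<in>{1..M}. u (tm m) \<in> V \<and> (\<forall>t\<in>{tm (m-1)<..tm m}. u t = u (tm m)))
                  \<and> (\<forall>t. t \<notin> {0<..tm M} \<longrightarrow> u t = (\<lambda>x. 0))}"

text \<open>Gradient (defined a.e., namely wherever the function is differentiable).\<close>
definition grad :: "('a::euclidean_space \<Rightarrow> real) \<Rightarrow> 'a \<Rightarrow> 'a" where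
  "grad f x = (SOME D. GDERIV f x :> D)"

definition L2ip :: "'a::euclidean_space set \<Rightarrow> ('a \<Rightarrow> real) \<Rightarrow> ('a \<Rightarrow> real) \<Rightarrow> real" where
  "L2ip \<Omega> u v = (LINT x:\<Omega>|lebesgue. u x * v x)"

definition Bform :: "(nat \<Rightarrow> real) \<Rightarrow> nat \<Rightarrow> 'a::euclidean_space set
                     \<Rightarrow> (real \<Rightarrow> 'a \<Rightarrow> real) \<Rightarrow> (real \<Rightarrow> 'a \<Rightarrow> real) \<Rightarrow> real" where
  "Bform tm M \<Omega> v w =
     (\<Sum>m=1..M. (tm m - tm (m-1)) * (LINT x:\<Omega>|lebesgue. grad (v (tm m)) x \<bullet> grad (w (tm m)) x))
   + (\<Sum>m=2..M. L2ip \<Omega> (\<lambda>x. v (tm m) x - v (tm (m-1)) x) (w (tm m)))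
   + L2ip \<Omega> (v (tm 1)) (w (tm 1))"

definition L2ipT :: "real \<Rightarrow> 'a::euclidean_space set \<Rightarrow> (real \<Rightarrow> 'a \<Rightarrow> real) \<Rightarrow> (real \<Rightarrow> 'a \<Rightarrow> real) \<Rightarrow> real" where
  "L2ipT T \<Omega> u v = (LINT p:({0<..<T} \<times> \<Omega>)|lebesgue. u (fst p) (snd p) * v (fst p) (snd p))"

text \<open>Surface integral over a flat facet F lying in the hyperplane a.x = b, |a| = 1:
  integrate f composed with the orthogonal projection onto the hyperplane over the prism
  F + [-1/2,1/2] a of unit height; by Fubini this equals the (N-1)-dimensional surface
  integral of f over F.\<close>
definition facet_integral :: "'a::euclidean_space set \<Rightarrow> ('a \<Rightarrow> real) \<Rightarrow> real" where
  "facet_integral F f =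
     (let (a, b) = (SOME (a, b). norm a = 1 \<and> F \<subseteq> {x. a \<bullet> x = b})
      in LINT x:{y + s *\<^sub>R a | y s. y \<in> F \<and> s \<in> {-1/2..1/2}}|lebesgue.
            f (x - (a \<bullet> x - b) *\<^sub>R a))"

text \<open>Surface integral over Gamma = boundary of Omega: sum over the facets of the polytope
  (pairwise overlaps are (N-2)-dimensional, hence negligible).\<close>
definition bdry_integral :: "'a::euclidean_space set \<Rightarrow> ('a \<Rightarrow> real) \<Rightarrow> real" where
  "bdry_integral \<Omega> f = (\<Sum>F\<in>{F. F facet_of closure \<Omega>}. facet_integral F f)"

definition bdry_ipT :: "real \<Rightarrow> 'a::euclidean_space set \<Rightarrow> (real \<Rightarrow> 'a \<Rightarrow> real) \<Rightarrow> (real \<Rightarrow> 'a \<Rightarrow> real) \<Rightarrow> real" where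
  "bdry_ipT T \<Omega> u v = (LINT t:{0<..<T}|lborel. bdry_integral \<Omega> (\<lambda>x. u t x * v t x))"

definition pkh :: "'a::euclidean_space set set \<Rightarrow> (nat \<Rightarrow> real) \<Rightarrow> nat \<Rightarrow> 'a set
                   \<Rightarrow> (real \<Rightarrow> 'a \<Rightarrow> real) \<Rightarrow> (real \<Rightarrow> 'a \<Rightarrow> real)" where
  "pkh Tr tm M \<Omega> \<phi> = (THE p. p \<in> pwc tm M (Vh Tr)
       \<and> (\<forall>\<psi>\<in>pwc tm M (Vh0 Tr \<Omega>). Bform tm M \<Omega> p \<psi> = 0)
       \<and> (\<forall>t. bdry_restr \<Omega> (p t) = \<phi> t))"

end

theory Submission
  imports Defs
begin


definition spn :: "(nat \<Rightarrow> ('x \<Rightarrow> real)) \<Rightarrow> nat \<Rightarrow> ('x \<Rightarrow> real) set" where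
  "spn E n = {f. \<exists>c. f = (\<lambda>x. \<Sum>i<n. c i * E i x)}"

lemma spn_0: "spn E 0 = {\<lambda>x. 0}"
  by (auto simp: spn_def)

lemma spn_Suc: "f \<in> spn E (Suc n) \<longleftrightarrow> (\<exists>u\<in>spn E n. \<exists>c. f = (\<lambda>x. u x + c * E n x))"
proof
  assume "f \<in> spn E (Suc n)"
  then obtain c where "f = (\<lambda>x. \<Sum>i<Suc n. c i * E i x)" by (auto simp: spn_def)
  then show "\<exists>u\<in>spn E n. \<exists>c. f = (\<lambda>x. u x + c * E n x)"
    by (auto simp: spn_def intro!: bexI[of _ "\<lambda>x. \<Sum>i<n. c i * E i x"])
next
  assume "\<exists>u\<in>spn E n. \<exists>c. f = (\<lambda>x. u x + c * E n x)"
  then obtain c d where "f = (\<lambda>x. (\<Sum>i<n. c i * E i x) + d * E n x)" by (auto simp: spn_def)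
  then have "f = (\<lambda>x. \<Sum>i<Suc n. (c(n:=d)) i * E i x)" by auto
  then show "f \<in> spn E (Suc n)" unfolding spn_def by blast
qed

lemma spn_mono: "spn E n \<subseteq> spn E (Suc n)"
proof
  fix f assume "f \<in> spn E n"
  moreover have "f = (\<lambda>x. f x + 0 * E n x)" by simp
  ultimately show "f \<in> spn E (Suc n)" unfolding spn_Suc
    by (intro bexI[where x=f] exI[where x=0])
qed

lemma spn_clo: "u \<in> spn E n \<Longrightarrow> v \<in> spn E n \<Longrightarrow> (\<lambda>x. u x + c * v x) \<in> spn E n"
proof -
  assume "u \<in> spn E n" "v \<in> spn E n"
  then obtain a b where "u = (\<lambda>x. \<Sum>i<n. a i * E i x)" "v = (\<lambda>x. \<Sum>i<n. b i * E i x)"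
    by (auto simp: spn_def)
  then have "(\<lambda>x. u x + c * v x) = (\<lambda>x. \<Sum>i<n. (\<lambda>i. a i + c * b i) i * E i x)"
    by (simp add: fun_eq_iff sum.distrib sum_distrib_left distrib_right mult.assoc)
  then show ?thesis unfolding spn_def mem_Collect_eq by (rule exI[where x="\<lambda>i. a i + c * b i"])
qed

lemma spn_sub: assumes clo: "\<And>u v c. u\<in>V \<Longrightarrow> v\<in>V \<Longrightarrow> (\<lambda>x. u x + c * v x) \<in> V"
  and zero: "(\<lambda>x. 0) \<in> V" and EV: "\<And>i. E i \<in> V"
  shows "spn E n \<subseteq> V"
proof (induction n)
  case 0 then show ?case using zero by (simp add: spn_0)
next
  case (Suc n) show ?case
  proof
    fix f assume "f \<in> spn E (Suc n)"
    then obtain u c where uc: "u \<in> spn E n" "f = (\<lambda>x. u x + c * E n x)" by (auto simp: spn_Suc)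
    have "u \<in> V" using uc(1) Suc.IH by blast
    then show "f \<in> V" unfolding uc(2) by (rule clo[OF _ EV])
  qed
qed

lemma lax_milgram_fd:
  assumes clo: "\<And>u v c. u\<in>V \<Longrightarrow> v\<in>V \<Longrightarrow> (\<lambda>x. u x + c * v x) \<in> V"
  and zero: "(\<lambda>x. 0) \<in> V" and EV: "\<And>i. E i \<in> V"
  and a1: "\<And>u v w c. u\<in>V \<Longrightarrow> v\<in>V \<Longrightarrow> w\<in>V \<Longrightarrow> a (\<lambda>x. u x + c * v x) w = a u w + c * a v w"
  and a2: "\<And>u v w c. u\<in>V \<Longrightarrow> v\<in>V \<Longrightarrow> w\<in>V \<Longrightarrow> a w (\<lambda>x. u x + c * v x) = a w u + c * a w v"
  and pd: "\<And>u. u\<in>V \<Longrightarrow> a u u = 0 \<Longrightarrow> u = (\<lambda>x. 0)"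
  shows "\<forall>l. (\<forall>u\<in>V. \<forall>v\<in>V. \<forall>c. l (\<lambda>x. u x + c * v x) = l u + c * l v)
     \<longrightarrow> (\<exists>q\<in>spn E n. \<forall>\<psi>\<in>spn E n. a q \<psi> = l \<psi>)"
proof (induction n)
  case 0
  show ?case
  proof (intro allI impI)
  fix l assume lin: "\<forall>u\<in>V. \<forall>v\<in>V. \<forall>c. l (\<lambda>x. u x + c * v x) = l u + c * l v"
  have "l (\<lambda>x. 0 + 1 * 0) = l (\<lambda>x. 0) + 1 * l (\<lambda>x. 0)"
    using spec[OF bspec[OF bspec[OF lin zero] zero], of 1] by simp
  then have "l (\<lambda>x. 0) = 0" by simp
  moreover have "a (\<lambda>x. 0) (\<lambda>x. 0) = 0" using a1[OF zero zero zero, of 1] by simp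
  ultimately show "\<exists>q\<in>spn E 0. \<forall>\<psi>\<in>spn E 0. a q \<psi> = l \<psi>" using zero by (auto simp: spn_0)
  qed
next
  case (Suc n)
  show ?case
  proof (intro allI impI)
  fix l assume lin: "\<forall>u\<in>V. \<forall>v\<in>V. \<forall>c. l (\<lambda>x. u x + c * v x) = l u + c * l v"
  have SV: "\<And>k. spn E k \<subseteq> V" by (rule spn_sub) (fact clo zero EV)+
  obtain q' where q': "q' \<in> spn E n" "\<And>\<psi>. \<psi>\<in>spn E n \<Longrightarrow> a q' \<psi> = l \<psi>"
    using mp[OF spec[OF Suc.IH, of l] lin] by blast
  have "\<forall>u\<in>V. \<forall>v\<in>V. \<forall>c. a (E n) (\<lambda>x. u x + c * v x) = a (E n) u + c * a (E n) v"
    by (intro ballI allI a2 EV)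
  then have "\<exists>q\<in>spn E n. \<forall>\<psi>\<in>spn E n. a q \<psi> = a (E n) \<psi>"
    by (rule mp[OF spec[OF Suc.IH]])
  then obtain r where r: "r \<in> spn E n" "\<And>\<psi>. \<psi>\<in>spn E n \<Longrightarrow> a r \<psi> = a (E n) \<psi>" by blast
  define f where "f = (\<lambda>x. E n x + (-1) * r x)"
  have rV: "r \<in> V" "q' \<in> V" using SV r q' by auto
  have fV: "f \<in> V" unfolding f_def by (rule clo[OF EV rV(1)])
  have af: "a f \<psi> = 0" if "\<psi> \<in> spn E n" for \<psi>
  proof -
    have "\<psi> \<in> V" using SV that by blast
    then have "a f \<psi> = a (E n) \<psi> + (-1) * a r \<psi>" unfolding f_def by (rule a1[OF EV rV(1)])
    then show ?thesis using r(2)[OF that] by simp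
  qed
  show "\<exists>q\<in>spn E (Suc n). \<forall>\<psi>\<in>spn E (Suc n). a q \<psi> = l \<psi>"
  proof (cases "a f f = 0")
    case True
    then have "f = (\<lambda>x. 0)" using pd fV by blast
    then have Er: "E n = r" unfolding f_def by (auto simp: fun_eq_iff dest: fun_cong)
    show ?thesis
    proof (rule bexI[where x=q'])
      show "q' \<in> spn E (Suc n)" using q' spn_mono by blast
      show "\<forall>\<psi>\<in>spn E (Suc n). a q' \<psi> = l \<psi>"
      proof
        fix \<psi> assume "\<psi> \<in> spn E (Suc n)"
        then obtain u c where u: "u \<in> spn E n" "\<psi> = (\<lambda>x. u x + c * E n x)" by (auto simp: spn_Suc)
        then have "\<psi> = (\<lambda>x. u x + c * r x)" using Er by simp
        then have "\<psi> \<in> spn E n" using spn_clo[OF u(1) r(1)] by simp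
        then show "a q' \<psi> = l \<psi>" using q' by blast
      qed
    qed
  next
    case False
    define c where "c = (l f - a q' f) / a f f"
    define q where "q = (\<lambda>x. q' x + c * f x)"
    have qV: "q \<in> V" unfolding q_def by (rule clo[OF rV(2) fV])
    have "q = (\<lambda>x. (q' x + (- c) * r x) + c * E n x)"
      unfolding q_def f_def by (auto simp: algebra_simps)
    moreover have "(\<lambda>x. q' x + (- c) * r x) \<in> spn E n" by (rule spn_clo[OF q'(1) r(1)])
    ultimately have qS: "q \<in> spn E (Suc n)" unfolding spn_Suc
      by (intro bexI[where x="\<lambda>x. q' x + (- c) * r x"] exI[where x=c])
    show ?thesis
    proof (rule bexI[OF _ qS], rule ballI)
      fix \<psi> assume "\<psi> \<in> spn E (Suc n)"
      then obtain u d where u: "u \<in> spn E n" "\<psi> = (\<lambda>x. u x + d * E n x)" by (auto simp: spn_Suc)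
      define \<psi>' where "\<psi>' = (\<lambda>x. u x + d * r x)"
      have \<psi>'S: "\<psi>' \<in> spn E n" unfolding \<psi>'_def by (rule spn_clo[OF u(1) r(1)])
      have \<psi>'V: "\<psi>' \<in> V" using SV \<psi>'S by blast
      have \<psi>eq: "\<psi> = (\<lambda>x. \<psi>' x + d * f x)" unfolding u(2) \<psi>'_def f_def by (auto simp: algebra_simps)
      have "a q \<psi> = a q \<psi>' + d * a q f" unfolding \<psi>eq by (rule a2[OF \<psi>'V fV qV])
      also have "a q \<psi>' = a q' \<psi>' + c * a f \<psi>'" unfolding q_def by (rule a1[OF rV(2) fV \<psi>'V])
      also have "a q f = a q' f + c * a f f" unfolding q_def by (rule a1[OF rV(2) fV fV])
      also have "a f \<psi>' = 0" by (rule af[OF \<psi>'S])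
      also have "a q' \<psi>' = l \<psi>'" by (rule q'(2)[OF \<psi>'S])
      also have "a q' f + c * a f f = l f" using False unfolding c_def by (simp add: field_simps)
      finally have "a q \<psi> = l \<psi>' + d * l f" by simp
      also have "\<dots> = l \<psi>" unfolding \<psi>eq using lin \<psi>'V fV by simp
      finally show "a q \<psi> = l \<psi>" .
    qed
  qed
  qed
qed

lemma fin_span:
  fixes N :: nat
  assumes clo: "\<And>u v c. u\<in>V \<Longrightarrow> v\<in>V \<Longrightarrow> (\<lambda>x. u x + c * v x) \<in> V"
  and zero: "(\<lambda>x. 0) \<in> V"
  shows "(\<And>v. v\<in>V \<Longrightarrow> (\<forall>j<N. v (xs j) = 0) \<Longrightarrow> v = (\<lambda>x. 0))
     \<Longrightarrow> \<exists>E n. (\<forall>i. E i \<in> V) \<and> V \<subseteq> spn E n"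
  using clo zero
proof (induction N arbitrary: V)
  case 0
  have "V \<subseteq> spn (\<lambda>i. \<lambda>x. 0) 0"
  proof
    fix v assume "v \<in> V"
    then have "v = (\<lambda>x. 0)" using "0.prems"(1) by blast
    then show "v \<in> spn (\<lambda>i. \<lambda>x. 0) 0" by (simp add: spn_0)
  qed
  then show ?case using "0.prems"(3) by (intro exI[where x="\<lambda>i x. 0"] exI[where x=0]) auto
next
  case (Suc N)
  show ?case
  proof (cases "\<exists>e\<in>V. e (xs N) \<noteq> 0")
    case False
    have *: "v = (\<lambda>x. 0)" if "v\<in>V" "\<forall>j<N. v (xs j) = 0" for v
    proof -
      have "\<forall>j<Suc N. v (xs j) = 0" using that False by (auto simp: less_Suc_eq)
      then show ?thesis using Suc.prems(1) that(1) by blast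
    qed
    show ?thesis
    proof (rule Suc.IH)
      show "\<And>v. v \<in> V \<Longrightarrow> \<forall>j<N. v (xs j) = 0 \<Longrightarrow> v = (\<lambda>x. 0)" by (rule *)
      show "\<And>u v c. u \<in> V \<Longrightarrow> v \<in> V \<Longrightarrow> (\<lambda>x. u x + c * v x) \<in> V" by (rule Suc.prems(2))
      show "(\<lambda>x. 0) \<in> V" by (rule Suc.prems(3))
    qed
  next
    case True
    then obtain e where e: "e \<in> V" "e (xs N) \<noteq> 0" by blast
    define e' where "e' = (\<lambda>x. 0 + (1 / e (xs N)) * e x)"
    have e'V: "e' \<in> V" unfolding e'_def by (rule Suc.prems(2)[OF Suc.prems(3) e(1)])
    have e'1: "e' (xs N) = 1" using e(2) unfolding e'_def by simp
    define V' where "V' = {v\<in>V. v (xs N) = 0}"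
    have "\<exists>E n. (\<forall>i. E i \<in> V') \<and> V' \<subseteq> spn E n"
    proof (rule Suc.IH)
      show "\<And>v. v\<in>V' \<Longrightarrow> (\<forall>j<N. v (xs j) = 0) \<Longrightarrow> v = (\<lambda>x. 0)"
      proof -
        fix v assume "v\<in>V'" "\<forall>j<N. v (xs j) = 0"
        then have "v \<in> V" "\<forall>j<Suc N. v (xs j) = 0" unfolding V'_def by (auto simp: less_Suc_eq)
        then show "v = (\<lambda>x. 0)" using Suc.prems(1) by blast
      qed
      show "(\<lambda>x. u x + c * v x) \<in> V'" if "u\<in>V'" "v\<in>V'" for u v c
      proof -
        have "u \<in> V" "v \<in> V" "u (xs N) = 0" "v (xs N) = 0" using that unfolding V'_def by auto
        then show ?thesis unfolding V'_def using Suc.prems(2)[of u v c] by simp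
      qed
      show "(\<lambda>x. 0) \<in> V'" unfolding V'_def using Suc.prems(3) by auto
    qed
    then obtain E n where E: "\<forall>i. E i \<in> V'" "V' \<subseteq> spn E n" by blast
    define E' where "E' = E(n := e')"
    have "V \<subseteq> spn E' (Suc n)"
    proof
      fix v assume vV: "v \<in> V"
      define v' where "v' = (\<lambda>x. v x + (- v (xs N)) * e' x)"
      have "v' \<in> V" unfolding v'_def by (rule Suc.prems(2)[OF vV e'V])
      moreover have "v' (xs N) = 0" using e'1 by (simp add: v'_def)
      ultimately have "v' \<in> V'" unfolding V'_def by simp
      then have "v' \<in> spn E n" using E by blast
      moreover have "spn E n = spn E' n"
      proof -
        have "(\<lambda>x. \<Sum>i<n. c i * E' i x) = (\<lambda>x. \<Sum>i<n. c i * E i x)" for c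
          unfolding E'_def by (intro ext sum.cong) auto
        then show ?thesis unfolding spn_def by simp
      qed
      ultimately have "v' \<in> spn E' n" by simp
      moreover have "v = (\<lambda>x. v' x + v (xs N) * E' n x)" unfolding v'_def E'_def by (simp add: algebra_simps)
      ultimately show "v \<in> spn E' (Suc n)" unfolding spn_Suc
        by (intro bexI[where x=v'] exI[where x="v (xs N)"])
    qed
    moreover have "\<forall>i. E' i \<in> V" using E e'V unfolding E'_def V'_def by auto
    ultimately show ?thesis by (intro exI[where x=E'] exI[where x="Suc n"]) simp
  qed
qed



definition avec :: "('a::euclidean_space \<Rightarrow> real) \<Rightarrow> 'a set \<Rightarrow> 'a" where
  "avec v K = (SOME a. \<exists>b. \<forall>y\<in>K. v y = a \<bullet> y + b)"

definition Gf :: "'a::euclidean_space set \<Rightarrow> ('a \<Rightarrow> real) \<Rightarrow> ('a \<Rightarrow> real) \<Rightarrow> real" where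
  "Gf \<Omega> u v = (LINT x:\<Omega>|lebesgue. grad u x \<bullet> grad v x)"

lemma bl_meas: "f \<in> borel_measurable borel \<Longrightarrow> f \<in> borel_measurable lebesgue"
  by (rule measurable_completion) simp

lemma grad_affine:
  fixes v :: "'a::euclidean_space \<Rightarrow> real"
  assumes "\<forall>y\<in>K. v y = a \<bullet> y + b" "x \<in> interior K"
  shows "grad v x = a"
proof -
  have "((\<lambda>y. a \<bullet> y + b) has_derivative (\<lambda>h. h \<bullet> a)) (at x)"
    by (auto intro!: derivative_eq_intros simp: inner_commute)
  moreover have "\<And>y. y \<in> interior K \<Longrightarrow> a \<bullet> y + b = v y"
    using assms(1) interior_subset[of K] by auto
  ultimately have d: "(v has_derivative (\<lambda>h. h \<bullet> a)) (at x)"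
    using has_derivative_transform_within_open[of "\<lambda>y. a \<bullet> y + b" "\<lambda>h. h \<bullet> a" x UNIV "interior K" v] assms(2)
    by auto
  have "(SOME D. GDERIV v x :> D) = a"
  proof (rule some_equality)
    show "GDERIV v x :> a" using d by (simp add: gderiv_def)
  next
    fix D assume "GDERIV v x :> D"
    then have eq: "(\<lambda>h. h \<bullet> D) = (\<lambda>h. h \<bullet> a)" using d has_derivative_unique by (auto simp: gderiv_def)
    have "(D - a) \<bullet> D = (D - a) \<bullet> a" using fun_cong[OF eq, of "D - a"] by simp
    then have "(D - a) \<bullet> (D - a) = 0" by (simp add: inner_diff_right)
    then show "D = a" by simp
  qed
  then show ?thesis by (simp add: grad_def)
qed

locale fem =
  fixes Tr :: "'a::euclidean_space set set" and \<Omega> :: "'a set"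
  assumes tri: "triangulation Tr \<Omega>" and opn: "open \<Omega>" and bdd: "bounded \<Omega>"
begin

lemma finTr: "finite Tr" and cover: "\<Union>Tr = closure \<Omega>"
  using tri unfolding triangulation_def by auto

lemma simp_hull: "K \<in> Tr \<Longrightarrow> \<exists>C. finite C \<and> K = convex hull C"
  using tri unfolding triangulation_def simplex_def by (meson aff_independent_finite)

lemma K_convex: "K \<in> Tr \<Longrightarrow> convex K" using simp_hull convex_convex_hull by metis
lemma K_compact: "K \<in> Tr \<Longrightarrow> compact K"
  using simp_hull compact_convex_hull finite_imp_compact by metis

lemma Om_sub: "\<Omega> \<subseteq> \<Union>Tr" using cover closure_subset by blast

lemma Om_lm: "\<Omega> \<in> sets lebesgue" "emeasure lebesgue \<Omega> < \<infinity>"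
  using lmeasurable_open[OF bdd opn] by (auto simp: fmeasurable_def)

lemma vh_cont: "v \<in> Vh Tr \<Longrightarrow> continuous_on (closure \<Omega>) v"
  using cover by (auto simp: Vh_def)

lemma vh_out: "v \<in> Vh Tr \<Longrightarrow> x \<notin> closure \<Omega> \<Longrightarrow> v x = 0"
  using cover by (auto simp: Vh_def)

lemma vh_meas: "v \<in> Vh Tr \<Longrightarrow> v \<in> borel_measurable lebesgue"
proof -
  assume v: "v \<in> Vh Tr"
  have "(\<lambda>x. indicator (closure \<Omega>) x *\<^sub>R v x) \<in> borel_measurable borel"
    by (rule borel_measurable_continuous_on_indicator) (use vh_cont[OF v] in auto)
  moreover have "(\<lambda>x. indicator (closure \<Omega>) x *\<^sub>R v x) = v"
    using vh_out[OF v] by (auto simp: indicator_def fun_eq_iff)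
  ultimately show ?thesis using bl_meas by metis
qed

lemma vh_bdd: "v \<in> Vh Tr \<Longrightarrow> \<exists>C. \<forall>x. \<bar>v x\<bar> \<le> C"
proof -
  assume v: "v \<in> Vh Tr"
  have "compact (v ` closure \<Omega>)"
    using compact_continuous_image[OF vh_cont[OF v]] bdd by simp
  then have "bounded (v ` closure \<Omega>)" by (rule compact_imp_bounded)
  then obtain b where b: "b > 0" "\<forall>y\<in>v ` closure \<Omega>. norm y \<le> b"
    unfolding bounded_pos by blast
  have "\<bar>v x\<bar> \<le> b" for x
    using b vh_out[OF v, of x] by (cases "x \<in> closure \<Omega>") auto
  then show ?thesis by blast
qed

lemma vh_clo: "u \<in> Vh Tr \<Longrightarrow> v \<in> Vh Tr \<Longrightarrow> (\<lambda>x. u x + c * v x) \<in> Vh Tr"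
proof -
  assume u: "u \<in> Vh Tr" and v: "v \<in> Vh Tr"
  have "\<exists>a b. \<forall>x\<in>K. u x + c * v x = a \<bullet> x + b" if K: "K \<in> Tr" for K
  proof -
    obtain a1 b1 where 1: "\<forall>x\<in>K. u x = a1 \<bullet> x + b1" using u K unfolding Vh_def by blast
    obtain a2 b2 where 2: "\<forall>x\<in>K. v x = a2 \<bullet> x + b2" using v K unfolding Vh_def by blast
    have "\<forall>x\<in>K. u x + c * v x = (a1 + c *\<^sub>R a2) \<bullet> x + (b1 + c * b2)"
      using 1 2 by (auto simp: inner_add_left algebra_simps)
    then show ?thesis by blast
  qed
  moreover have "continuous_on (\<Union>Tr) (\<lambda>x. u x + c * v x)"
    using u v by (auto simp: Vh_def intro!: continuous_intros)
  ultimately show ?thesis using u v by (auto simp: Vh_def)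
qed

lemma vh_zero: "(\<lambda>x. 0) \<in> Vh Tr"
proof -
  have "\<exists>a b. \<forall>x\<in>K. (0::real) = a \<bullet> x + b" for K
    by (rule exI[where x=0], rule exI[where x=0]) simp
  then show ?thesis by (auto simp: Vh_def)
qed

lemma vh0_clo: "u \<in> Vh0 Tr \<Omega> \<Longrightarrow> v \<in> Vh0 Tr \<Omega> \<Longrightarrow> (\<lambda>x. u x + c * v x) \<in> Vh0 Tr \<Omega>"
  using vh_clo by (auto simp: Vh0_def)

lemma vh0_zero: "(\<lambda>x. 0) \<in> Vh0 Tr \<Omega>"
  using vh_zero by (auto simp: Vh0_def)

lemma prod_int: "u \<in> Vh Tr \<Longrightarrow> v \<in> Vh Tr \<Longrightarrow> set_integrable lebesgue \<Omega> (\<lambda>x. u x * v x)"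
proof -
  assume u: "u \<in> Vh Tr" and v: "v \<in> Vh Tr"
  obtain C1 where C1: "\<forall>x. \<bar>u x\<bar> \<le> C1" using vh_bdd[OF u] by blast
  obtain C2 where C2: "\<forall>x. \<bar>v x\<bar> \<le> C2" using vh_bdd[OF v] by blast
  have "norm (u x * v x) \<le> C1 * C2" for x
    using C1 C2 by (simp add: abs_mult mult_mono')
  then show ?thesis unfolding set_integrable_def
    by (intro integrableI_bounded_set_indicator[where B="C1*C2"] Om_lm)
       (auto intro: borel_measurable_times[OF vh_meas[OF u] vh_meas[OF v]])
qed

lemma L2_lin1: "u \<in> Vh Tr \<Longrightarrow> v \<in> Vh Tr \<Longrightarrow> w \<in> Vh Tr \<Longrightarrow>
   L2ip \<Omega> (\<lambda>x. u x + c * v x) w = L2ip \<Omega> u w + c * L2ip \<Omega> v w"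
proof -
  assume u: "u \<in> Vh Tr" and v: "v \<in> Vh Tr" and w: "w \<in> Vh Tr"
  have "L2ip \<Omega> (\<lambda>x. u x + c * v x) w = (LINT x:\<Omega>|lebesgue. u x * w x + c * (v x * w x))"
    unfolding L2ip_def by (simp add: algebra_simps)
  also have "\<dots> = L2ip \<Omega> u w + c * L2ip \<Omega> v w"
    unfolding L2ip_def
    by (subst set_integral_add(2)) (auto intro!: prod_int u v w set_integrable_mult_right)
  finally show ?thesis .
qed

lemma L2_sym: "L2ip \<Omega> u v = L2ip \<Omega> v u"
  unfolding L2ip_def by (simp add: mult.commute)

lemma L2_lin2: "u \<in> Vh Tr \<Longrightarrow> v \<in> Vh Tr \<Longrightarrow> w \<in> Vh Tr \<Longrightarrow>
   L2ip \<Omega> w (\<lambda>x. u x + c * v x) = L2ip \<Omega> w u + c * L2ip \<Omega> w v"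
proof -
  assume "u \<in> Vh Tr" "v \<in> Vh Tr" "w \<in> Vh Tr"
  then have "L2ip \<Omega> (\<lambda>x. u x + c * v x) w = L2ip \<Omega> u w + c * L2ip \<Omega> v w" by (rule L2_lin1)
  then show ?thesis using L2_sym[of w] by simp
qed

lemma L2_nonneg: "L2ip \<Omega> u u \<ge> 0"
  unfolding L2ip_def set_lebesgue_integral_def by (rule integral_nonneg_AE) (auto simp: indicator_def)

lemma L2_pd: assumes u: "u \<in> Vh0 Tr \<Omega>" and z: "L2ip \<Omega> u u = 0" shows "u = (\<lambda>x. 0)"
proof -
  have uv: "u \<in> Vh Tr" using u by (simp add: Vh0_def)
  have "AE x in lebesgue. indicator \<Omega> x *\<^sub>R (u x * u x) = 0"
    using z prod_int[OF uv uv] unfolding L2ip_def set_lebesgue_integral_def set_integrable_def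
    by (subst (asm) integral_nonneg_eq_0_iff_AE) (auto simp: indicator_def)
  then obtain N where N0: "{x\<in>space lebesgue. \<not> indicator \<Omega> x *\<^sub>R (u x * u x) = 0} \<subseteq> N"
     "N \<in> null_sets lebesgue"
    unfolding eventually_ae_filter by blast
  then have N: "N \<in> null_sets lebesgue" "{x. \<not> indicator \<Omega> x *\<^sub>R (u x * u x) = 0} \<subseteq> N" by auto
  define S where "S = {x\<in>\<Omega>. u x \<noteq> 0}"
  have "S \<subseteq> N" using N(2) unfolding S_def by (auto simp: indicator_def)
  then have "negligible S" using N(1) negligible_iff_null_sets negligible_subset by metis
  moreover have "open S"
  proof -
    have "continuous_on \<Omega> u" using vh_cont[OF uv] closure_subset continuous_on_subset by metis
    then have "open (u -` (-{0}) \<inter> \<Omega>)" using opn continuous_on_open_vimage by blast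
    moreover have "u -` (-{0}) \<inter> \<Omega> = S" unfolding S_def by auto
    ultimately show ?thesis by simp
  qed
  ultimately have "S = {}" using open_not_negligible by blast
  show ?thesis
  proof
    fix x
    show "u x = 0"
    proof (cases "x \<in> \<Omega>")
      case True then show ?thesis using \<open>S = {}\<close> S_def by auto
    next
      case False
      show ?thesis
      proof (cases "x \<in> closure \<Omega>")
        case True
        then have "x \<in> frontier \<Omega>" using False opn by (simp add: frontier_def interior_open)
        then show ?thesis using u by (auto simp: Vh0_def)
      qed (use vh_out[OF uv] in auto)
    qed
  qed
qed

end


context fem begin

definition UU :: "'a set" where "UU = \<Union>(interior ` Tr)"

lemma vh_aff: "v \<in> Vh Tr \<Longrightarrow> K \<in> Tr \<Longrightarrow> \<exists>b. \<forall>y\<in>K. v y = avec v K \<bullet> y + b"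
proof -
  assume "v \<in> Vh Tr" "K \<in> Tr"
  then have "\<exists>a b. \<forall>y\<in>K. v y = a \<bullet> y + b" unfolding Vh_def by blast
  then show ?thesis unfolding avec_def by (rule someI_ex[where P="\<lambda>a. \<exists>b. \<forall>y\<in>K. v y = a \<bullet> y + b"])
qed

lemma grad_vh: "v \<in> Vh Tr \<Longrightarrow> K \<in> Tr \<Longrightarrow> x \<in> interior K \<Longrightarrow> grad v x = avec v K"
proof -
  assume v: "v \<in> Vh Tr" and K: "K \<in> Tr" and x: "x \<in> interior K"
  obtain b where "\<forall>y\<in>K. v y = avec v K \<bullet> y + b" using vh_aff[OF v K] by blast
  then show ?thesis by (rule grad_affine[OF _ x])
qed

lemma grad_lin: "u \<in> Vh Tr \<Longrightarrow> v \<in> Vh Tr \<Longrightarrow> x \<in> UU \<Longrightarrow>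
   grad (\<lambda>y. u y + c * v y) x = grad u x + c *\<^sub>R grad v x"
proof -
  assume u: "u \<in> Vh Tr" and v: "v \<in> Vh Tr" and x: "x \<in> UU"
  then obtain K where K: "K \<in> Tr" "x \<in> interior K" unfolding UU_def by blast
  obtain b1 where 1: "\<forall>y\<in>K. u y = avec u K \<bullet> y + b1" using vh_aff[OF u K(1)] by blast
  obtain b2 where 2: "\<forall>y\<in>K. v y = avec v K \<bullet> y + b2" using vh_aff[OF v K(1)] by blast
  have "\<forall>y\<in>K. u y + c * v y = (avec u K + c *\<^sub>R avec v K) \<bullet> y + (b1 + c * b2)"
    using 1 2 by (simp add: inner_add_left distrib_left)
  then have "grad (\<lambda>y. u y + c * v y) x = avec u K + c *\<^sub>R avec v K"
    by (rule grad_affine[OF _ K(2)])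
  then show ?thesis using grad_vh[OF u K] grad_vh[OF v K] by simp
qed

lemma grad_zero: "grad (\<lambda>y. 0) x = 0"
proof -
  have "\<forall>y\<in>UNIV. (0::real) = 0 \<bullet> y + 0" by simp
  then show ?thesis using grad_affine[of UNIV "\<lambda>y. 0" 0 0 x] by simp
qed

lemma UU_open: "open UU" unfolding UU_def by auto

lemma UU_ae: "AE x in lebesgue. (x \<in> \<Omega> \<inter> UU) = (x \<in> \<Omega>)"
proof -
  have sub: "\<Omega> - UU \<subseteq> \<Union>(frontier ` Tr)"
  proof
    fix x assume x: "x \<in> \<Omega> - UU"
    then obtain K where K: "K \<in> Tr" "x \<in> K" using Om_sub by blast
    have "x \<notin> interior K" using x K(1) unfolding UU_def by blast
    moreover have "closure K = K" using K_compact[OF K(1)] by (simp add: compact_imp_closed closure_closed)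
    ultimately have "x \<in> frontier K" using K(2) by (simp add: frontier_def)
    then show "x \<in> \<Union>(frontier ` Tr)" using K(1) by blast
  qed
  have "negligible (\<Union>(frontier ` Tr))"
    by (rule negligible_Union) (auto simp: finTr intro!: negligible_convex_frontier K_convex)
  then have "negligible (\<Omega> - UU)" using sub negligible_subset by blast
  then have "\<Omega> - UU \<in> null_sets lebesgue" using negligible_iff_null_sets by blast
  then show ?thesis by (rule AE_I') auto
qed

lemma grad_cont: "v \<in> Vh Tr \<Longrightarrow> continuous_on UU (grad v)"
  unfolding UU_def
proof (rule continuous_on_open_Union)
  fix s assume v: "v \<in> Vh Tr" and "s \<in> interior ` Tr"
  then obtain K where K: "K \<in> Tr" "s = interior K" by blast
  show "open s" using K by simp
  show "continuous_on s (grad v)"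
  proof (rule continuous_on_eq[OF continuous_on_const[of s "avec v K"]])
    fix x assume "x \<in> s" then show "avec v K = grad v x" using grad_vh[OF v K(1)] K(2) by simp
  qed
qed

lemma grad_bdd: "v \<in> Vh Tr \<Longrightarrow> \<exists>B\<ge>0. \<forall>x\<in>UU. norm (grad v x) \<le> B"
proof -
  assume v: "v \<in> Vh Tr"
  have "norm (grad v x) \<le> (\<Sum>K\<in>Tr. norm (avec v K))" if "x \<in> UU" for x
  proof -
    obtain K where K: "K \<in> Tr" "x \<in> interior K" using \<open>x \<in> UU\<close> unfolding UU_def by blast
    have "norm (avec v K) \<le> (\<Sum>K\<in>Tr. norm (avec v K))"
      by (rule member_le_sum) (auto simp: K finTr)
    then show ?thesis using grad_vh[OF v K] by simp
  qed
  moreover have "0 \<le> (\<Sum>K\<in>Tr. norm (avec v K))" by (simp add: sum_nonneg)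
  ultimately show ?thesis by blast
qed

lemma A_lm: "\<Omega> \<inter> UU \<in> sets lebesgue" "emeasure lebesgue (\<Omega> \<inter> UU) < \<infinity>"
proof -
  have "\<Omega> \<inter> UU \<in> lmeasurable"
    by (rule lmeasurable_open) (use bdd opn UU_open in auto)
  then show "\<Omega> \<inter> UU \<in> sets lebesgue" "emeasure lebesgue (\<Omega> \<inter> UU) < \<infinity>"
    by (auto simp: fmeasurable_def)
qed

lemma G_int: "u \<in> Vh Tr \<Longrightarrow> v \<in> Vh Tr \<Longrightarrow>
   set_integrable lebesgue (\<Omega> \<inter> UU) (\<lambda>x. grad u x \<bullet> grad v x)"
proof -
  assume u: "u \<in> Vh Tr" and v: "v \<in> Vh Tr"
  obtain B1 where B1: "B1 \<ge> 0" "\<forall>x\<in>UU. norm (grad u x) \<le> B1" using grad_bdd[OF u] by blast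
  obtain B2 where B2: "B2 \<ge> 0" "\<forall>x\<in>UU. norm (grad v x) \<le> B2" using grad_bdd[OF v] by blast
  have c: "continuous_on (\<Omega> \<inter> UU) (\<lambda>x. grad u x \<bullet> grad v x)"
    by (intro continuous_intros continuous_on_subset[OF grad_cont[OF u]] continuous_on_subset[OF grad_cont[OF v]]) auto
  have m: "(\<lambda>x. indicator (\<Omega> \<inter> UU) x *\<^sub>R (grad u x \<bullet> grad v x)) \<in> borel_measurable lebesgue"
    apply (rule bl_meas)
    apply (rule borel_measurable_continuous_on_indicator)
    using opn UU_open c by auto
  have b: "norm (indicator (\<Omega> \<inter> UU) x *\<^sub>R (grad u x \<bullet> grad v x)) \<le> B1 * B2" for x
  proof (cases "x \<in> \<Omega> \<inter> UU")
    case True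
    have "\<bar>grad u x \<bullet> grad v x\<bar> \<le> norm (grad u x) * norm (grad v x)" by (rule Cauchy_Schwarz_ineq2)
    also have "\<dots> \<le> B1 * B2" using True B1 B2 by (intro mult_mono) auto
    finally show ?thesis using True by simp
  next
    case False then show ?thesis using B1 B2 by simp
  qed
  show ?thesis unfolding set_integrable_def
    apply (rule integrableI_bounded_set[where A="\<Omega> \<inter> UU" and B="B1*B2"])
        apply (rule A_lm(1))
       apply (rule m)
      apply (rule A_lm(2))
     apply (rule AE_I2) using b apply blast
    apply (rule AE_I2) apply simp
    done
qed

lemma G_UU: "u \<in> Vh Tr \<Longrightarrow> v \<in> Vh Tr \<Longrightarrow>
   Gf \<Omega> u v = (LINT x:\<Omega> \<inter> UU|lebesgue. grad u x \<bullet> grad v x)"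
proof -
  assume u: "u \<in> Vh Tr" and v: "v \<in> Vh Tr"
  have m1: "set_borel_measurable lebesgue (\<Omega> \<inter> UU) (\<lambda>x. grad u x \<bullet> grad v x)"
    using G_int[OF u v] unfolding set_integrable_def set_borel_measurable_def
    by (rule borel_measurable_integrable)
  have "AE x in lebesgue. indicator (\<Omega> \<inter> UU) x *\<^sub>R (grad u x \<bullet> grad v x)
                         = indicator \<Omega> x *\<^sub>R (grad u x \<bullet> grad v x)"
    using UU_ae by eventually_elim (auto simp: indicator_def)
  then have m2: "set_borel_measurable lebesgue \<Omega> (\<lambda>x. grad u x \<bullet> grad v x)"
    using m1 unfolding set_borel_measurable_def by (rule borel_measurable_AE[rotated])
  show ?thesis unfolding Gf_def
    by (rule set_integral_cong_set[OF m1 m2 UU_ae])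
qed

lemma G_lin1: "u \<in> Vh Tr \<Longrightarrow> v \<in> Vh Tr \<Longrightarrow> w \<in> Vh Tr \<Longrightarrow>
   Gf \<Omega> (\<lambda>x. u x + c * v x) w = Gf \<Omega> u w + c * Gf \<Omega> v w"
proof -
  assume u: "u \<in> Vh Tr" and v: "v \<in> Vh Tr" and w: "w \<in> Vh Tr"
  have "Gf \<Omega> (\<lambda>x. u x + c * v x) w = (LINT x:\<Omega> \<inter> UU|lebesgue. grad (\<lambda>x. u x + c * v x) x \<bullet> grad w x)"
    by (rule G_UU[OF vh_clo[OF u v] w])
  also have "\<dots> = (LINT x:\<Omega> \<inter> UU|lebesgue. grad u x \<bullet> grad w x + c * (grad v x \<bullet> grad w x))"
    by (rule set_lebesgue_integral_cong) (auto simp: A_lm grad_lin[OF u v] inner_add_left)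
  also have "\<dots> = (LINT x:\<Omega> \<inter> UU|lebesgue. grad u x \<bullet> grad w x) + c * (LINT x:\<Omega> \<inter> UU|lebesgue. grad v x \<bullet> grad w x)"
    using set_integral_add(2)[OF G_int[OF u w] set_integrable_mult_right[OF G_int[OF v w], of c]] by simp
  also have "\<dots> = Gf \<Omega> u w + c * Gf \<Omega> v w" using G_UU[OF u w] G_UU[OF v w] by simp
  finally show ?thesis .
qed

lemma G_sym: "Gf \<Omega> u v = Gf \<Omega> v u"
  unfolding Gf_def by (simp add: inner_commute)

lemma G_lin2: "u \<in> Vh Tr \<Longrightarrow> v \<in> Vh Tr \<Longrightarrow> w \<in> Vh Tr \<Longrightarrow>
   Gf \<Omega> w (\<lambda>x. u x + c * v x) = Gf \<Omega> w u + c * Gf \<Omega> w v"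
proof -
  assume "u \<in> Vh Tr" "v \<in> Vh Tr" "w \<in> Vh Tr"
  then have "Gf \<Omega> (\<lambda>x. u x + c * v x) w = Gf \<Omega> u w + c * Gf \<Omega> v w" by (rule G_lin1)
  then show ?thesis using G_sym[of w] by simp
qed

lemma G_nonneg: "Gf \<Omega> u u \<ge> 0"
  unfolding Gf_def set_lebesgue_integral_def by (rule integral_nonneg_AE) (auto simp: indicator_def)

lemma G_zero: "Gf \<Omega> u (\<lambda>x. 0) = 0"
  unfolding Gf_def by (simp add: grad_zero)

lemma L2_zero: "L2ip \<Omega> u (\<lambda>x. 0) = 0"
  unfolding L2ip_def by simp

end


context fem begin

lemma V0_span: "\<exists>E n. (\<forall>i. E i \<in> Vh0 Tr \<Omega>) \<and> Vh0 Tr \<Omega> = spn E n"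
proof -
  define Cs :: "'a set \<Rightarrow> 'a set" where "Cs K = (SOME C. finite C \<and> K = convex hull C)" for K
  have Cs: "finite (Cs K) \<and> K = convex hull (Cs K)" if "K \<in> Tr" for K
    unfolding Cs_def by (rule someI_ex) (rule simp_hull[OF that])
  define Vert where "Vert = \<Union>(Cs ` Tr)"
  have "finite Vert" unfolding Vert_def using Cs finTr by auto
  then obtain l where l: "set l = Vert" using finite_list by blast
  have inj: "v = (\<lambda>x. 0)" if v0: "v \<in> Vh0 Tr \<Omega>" and vz: "\<forall>j<length l. v (l ! j) = 0" for v
  proof
    fix x
    have v: "v \<in> Vh Tr" using v0 by (simp add: Vh0_def)
    have vV: "v c = 0" if "c \<in> Vert" for c
      using vz that l by (metis in_set_conv_nth)
    show "v x = 0"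
    proof (cases "x \<in> \<Union>Tr")
      case False then show ?thesis using v by (auto simp: Vh_def)
    next
      case True
      then obtain K where K: "K \<in> Tr" "x \<in> K" by blast
      obtain a b where ab: "\<forall>y\<in>K. v y = a \<bullet> y + b" using v K(1) unfolding Vh_def by blast
      have fC: "finite (Cs K)" and KC: "K = convex hull (Cs K)" using Cs[OF K(1)] by auto
      have "x \<in> convex hull (Cs K)" using K(2) KC by simp
      then obtain u where u: "\<forall>c\<in>Cs K. 0 \<le> u c" "sum u (Cs K) = 1" "(\<Sum>c\<in>Cs K. u c *\<^sub>R c) = x"
        unfolding convex_hull_finite[OF fC] by blast
      have CK: "c \<in> K" if "c \<in> Cs K" for c using KC that hull_inc by metis
      have "v x = a \<bullet> (\<Sum>c\<in>Cs K. u c *\<^sub>R c) + b * sum u (Cs K)" using ab K(2) u by simp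
      also have "\<dots> = (\<Sum>c\<in>Cs K. u c * (a \<bullet> c + b))"
        by (simp add: inner_sum_right sum_distrib_left sum.distrib algebra_simps)
      also have "\<dots> = (\<Sum>c\<in>Cs K. u c * v c)"
        by (rule sum.cong) (use ab CK in auto)
      also have "\<dots> = 0"
        by (rule sum.neutral) (use vV K(1) Vert_def in auto)
      finally show ?thesis .
    qed
  qed
  have "\<exists>E n. (\<forall>i. E i \<in> Vh0 Tr \<Omega>) \<and> Vh0 Tr \<Omega> \<subseteq> spn E n"
  proof (rule fin_span[where xs="\<lambda>j. l ! j" and N="length l"])
    show "\<And>u v c. u \<in> Vh0 Tr \<Omega> \<Longrightarrow> v \<in> Vh0 Tr \<Omega> \<Longrightarrow> (\<lambda>x. u x + c * v x) \<in> Vh0 Tr \<Omega>"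
      by (rule vh0_clo)
    show "(\<lambda>x. 0) \<in> Vh0 Tr \<Omega>" by (rule vh0_zero)
    show "\<And>v. v \<in> Vh0 Tr \<Omega> \<Longrightarrow> \<forall>j<length l. v (l ! j) = 0 \<Longrightarrow> v = (\<lambda>x. 0)"
      by (rule inj)
  qed
  then obtain E n where E: "\<forall>i. E i \<in> Vh0 Tr \<Omega>" "Vh0 Tr \<Omega> \<subseteq> spn E n" by blast
  have "spn E n \<subseteq> Vh0 Tr \<Omega>"
  proof (rule spn_sub)
    show "\<And>u v c. u \<in> Vh0 Tr \<Omega> \<Longrightarrow> v \<in> Vh0 Tr \<Omega> \<Longrightarrow> (\<lambda>x. u x + c * v x) \<in> Vh0 Tr \<Omega>"
      by (rule vh0_clo)
    show "(\<lambda>x. 0) \<in> Vh0 Tr \<Omega>" by (rule vh0_zero)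
    show "\<And>i. E i \<in> Vh0 Tr \<Omega>" using E(1) by blast
  qed
  then have "Vh0 Tr \<Omega> = spn E n" using E(2) by (rule subset_antisym[rotated])
  then show ?thesis using E(1) by blast
qed

lemma vh0_vh: "u \<in> Vh0 Tr \<Omega> \<Longrightarrow> u \<in> Vh Tr" by (simp add: Vh0_def)

lemma a_pd: assumes k: "k > 0" and u: "u \<in> Vh0 Tr \<Omega>" and z: "k * Gf \<Omega> u u + L2ip \<Omega> u u = 0"
  shows "u = (\<lambda>x. 0)"
proof -
  have "k * Gf \<Omega> u u \<ge> 0" using k G_nonneg by simp
  then have "L2ip \<Omega> u u = 0" using L2_nonneg[of u] z by linarith
  then show ?thesis by (rule L2_pd[OF u])
qed

lemma step_ex:
  assumes k: "k > 0" and P: "P \<in> Vh Tr" and dat: "dat \<in> VhG Tr \<Omega>"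
  shows "\<exists>p\<in>Vh Tr. bdry_restr \<Omega> p = dat \<and>
           (\<forall>\<zeta>\<in>Vh0 Tr \<Omega>. k * Gf \<Omega> p \<zeta> + L2ip \<Omega> (\<lambda>x. p x - P x) \<zeta> = 0)"
proof -
  obtain E0 where E0: "E0 \<in> Vh Tr" "dat = bdry_restr \<Omega> E0" using dat unfolding VhG_def by blast
  obtain E n where E: "\<forall>i. E i \<in> Vh0 Tr \<Omega>" "Vh0 Tr \<Omega> = spn E n" using V0_span by blast
  define a where "a u \<zeta> = k * Gf \<Omega> u \<zeta> + L2ip \<Omega> u \<zeta>" for u \<zeta>
  define l where "l \<zeta> = L2ip \<Omega> P \<zeta> - a E0 \<zeta>" for \<zeta>
  have a1: "a (\<lambda>x. u x + c * v x) w = a u w + c * a v w"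
    if "u \<in> Vh Tr" "v \<in> Vh Tr" "w \<in> Vh Tr" for u v w c
    unfolding a_def using G_lin1[OF that, of c] L2_lin1[OF that, of c] by (simp add: algebra_simps)
  have a2: "a w (\<lambda>x. u x + c * v x) = a w u + c * a w v"
    if "u \<in> Vh Tr" "v \<in> Vh Tr" "w \<in> Vh Tr" for u v w c
    unfolding a_def using G_lin2[OF that, of c] L2_lin2[OF that, of c] by (simp add: algebra_simps)
  have ex: "\<forall>l. (\<forall>u\<in>Vh0 Tr \<Omega>. \<forall>v\<in>Vh0 Tr \<Omega>. \<forall>c. l (\<lambda>x. u x + c * v x) = l u + c * l v)
     \<longrightarrow> (\<exists>q\<in>spn E n. \<forall>\<psi>\<in>spn E n. a q \<psi> = l \<psi>)"
  proof (rule lax_milgram_fd)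
    show "\<And>u v c. u \<in> Vh0 Tr \<Omega> \<Longrightarrow> v \<in> Vh0 Tr \<Omega> \<Longrightarrow> (\<lambda>x. u x + c * v x) \<in> Vh0 Tr \<Omega>"
      by (rule vh0_clo)
    show "(\<lambda>x. 0) \<in> Vh0 Tr \<Omega>" by (rule vh0_zero)
    show "\<And>i. E i \<in> Vh0 Tr \<Omega>" using E(1) by blast
    show "\<And>u v w c. u \<in> Vh0 Tr \<Omega> \<Longrightarrow> v \<in> Vh0 Tr \<Omega> \<Longrightarrow> w \<in> Vh0 Tr \<Omega> \<Longrightarrow>
            a (\<lambda>x. u x + c * v x) w = a u w + c * a v w"
      using a1 vh0_vh by blast
    show "\<And>u v w c. u \<in> Vh0 Tr \<Omega> \<Longrightarrow> v \<in> Vh0 Tr \<Omega> \<Longrightarrow> w \<in> Vh0 Tr \<Omega> \<Longrightarrow>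
            a w (\<lambda>x. u x + c * v x) = a w u + c * a w v"
      using a2 vh0_vh by blast
    show "\<And>u. u \<in> Vh0 Tr \<Omega> \<Longrightarrow> a u u = 0 \<Longrightarrow> u = (\<lambda>x. 0)"
      unfolding a_def by (rule a_pd[OF k])
  qed
  have llin: "\<forall>u\<in>Vh0 Tr \<Omega>. \<forall>v\<in>Vh0 Tr \<Omega>. \<forall>c. l (\<lambda>x. u x + c * v x) = l u + c * l v"
  proof (intro ballI allI)
    fix u v c assume "u \<in> Vh0 Tr \<Omega>" "v \<in> Vh0 Tr \<Omega>"
    then have uv: "u \<in> Vh Tr" "v \<in> Vh Tr" by (auto simp: vh0_vh)
    show "l (\<lambda>x. u x + c * v x) = l u + c * l v"
      unfolding l_def using a2[OF uv E0(1), of c] L2_lin2[OF uv P, of c] by (simp add: algebra_simps)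
  qed
  obtain q where q: "q \<in> spn E n" "\<And>\<psi>. \<psi> \<in> spn E n \<Longrightarrow> a q \<psi> = l \<psi>"
    using mp[OF spec[OF ex, of l] llin] by blast
  have q0: "q \<in> Vh0 Tr \<Omega>" using q(1) E(2) by simp
  have qv: "q \<in> Vh Tr" using q0 by (rule vh0_vh)
  define p where "p = (\<lambda>x. E0 x + 1 * q x)"
  have pv: "p \<in> Vh Tr" unfolding p_def by (rule vh_clo[OF E0(1) qv])
  have "bdry_restr \<Omega> p = bdry_restr \<Omega> E0"
    using q0 unfolding bdry_restr_def p_def Vh0_def by (auto simp: fun_eq_iff)
  moreover have "k * Gf \<Omega> p \<zeta> + L2ip \<Omega> (\<lambda>x. p x - P x) \<zeta> = 0" if \<zeta>: "\<zeta> \<in> Vh0 Tr \<Omega>" for \<zeta>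
  proof -
    have \<zeta>v: "\<zeta> \<in> Vh Tr" using \<zeta> by (rule vh0_vh)
    have "(\<lambda>x. p x - P x) = (\<lambda>x. p x + (-1) * P x)" by simp
    then have "L2ip \<Omega> (\<lambda>x. p x - P x) \<zeta> = L2ip \<Omega> p \<zeta> - L2ip \<Omega> P \<zeta>"
      using L2_lin1[OF pv P \<zeta>v, of "-1"] by simp
    moreover have "k * Gf \<Omega> p \<zeta> + L2ip \<Omega> p \<zeta> = a E0 \<zeta> + a q \<zeta>"
      using a1[OF E0(1) qv \<zeta>v, of 1] unfolding p_def a_def by simp
    moreover have "a q \<zeta> = l \<zeta>" using q(2) \<zeta> E(2) by simp
    ultimately show ?thesis unfolding l_def by simp
  qed
  ultimately show ?thesis using pv E0(2) by blast
qed

lemma step_un: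
  assumes k: "k > 0" and P: "P \<in> Vh Tr" and p1: "p1 \<in> Vh Tr" and p2: "p2 \<in> Vh Tr"
    and bd: "bdry_restr \<Omega> p1 = bdry_restr \<Omega> p2"
    and e1: "\<forall>\<zeta>\<in>Vh0 Tr \<Omega>. k * Gf \<Omega> p1 \<zeta> + L2ip \<Omega> (\<lambda>x. p1 x - P x) \<zeta> = 0"
    and e2: "\<forall>\<zeta>\<in>Vh0 Tr \<Omega>. k * Gf \<Omega> p2 \<zeta> + L2ip \<Omega> (\<lambda>x. p2 x - P x) \<zeta> = 0"
  shows "p1 = p2"
proof -
  define d where "d = (\<lambda>x. p1 x + (-1) * p2 x)"
  have dv: "d \<in> Vh Tr" unfolding d_def by (rule vh_clo[OF p1 p2])
  have "p1 x = p2 x" if "x \<in> frontier \<Omega>" for x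
    using fun_cong[OF bd, of x] that by (simp add: bdry_restr_def)
  then have d0: "d \<in> Vh0 Tr \<Omega>" using dv unfolding Vh0_def d_def by auto
  have red: "k * Gf \<Omega> p \<zeta> + L2ip \<Omega> p \<zeta> = L2ip \<Omega> P \<zeta>"
    if p: "p \<in> Vh Tr" and e: "k * Gf \<Omega> p \<zeta> + L2ip \<Omega> (\<lambda>x. p x - P x) \<zeta> = 0" and \<zeta>: "\<zeta> \<in> Vh Tr" for p \<zeta>
  proof -
    have "(\<lambda>x. p x - P x) = (\<lambda>x. p x + (-1) * P x)" by simp
    then have "L2ip \<Omega> (\<lambda>x. p x - P x) \<zeta> = L2ip \<Omega> p \<zeta> - L2ip \<Omega> P \<zeta>"
      using L2_lin1[OF p P \<zeta>, of "-1"] by simp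
    then show ?thesis using e by simp
  qed
  have r1: "k * Gf \<Omega> p1 d + L2ip \<Omega> p1 d = L2ip \<Omega> P d" using red[OF p1 _ dv] e1 d0 by blast
  have r2: "k * Gf \<Omega> p2 d + L2ip \<Omega> p2 d = L2ip \<Omega> P d" using red[OF p2 _ dv] e2 d0 by blast
  have g: "Gf \<Omega> d d = Gf \<Omega> p1 d + (-1) * Gf \<Omega> p2 d"
    using G_lin1[OF p1 p2 dv, of "-1", folded d_def] .
  have l: "L2ip \<Omega> d d = L2ip \<Omega> p1 d + (-1) * L2ip \<Omega> p2 d"
    using L2_lin1[OF p1 p2 dv, of "-1", folded d_def] .
  have "k * Gf \<Omega> d d + L2ip \<Omega> d d = (k * Gf \<Omega> p1 d + L2ip \<Omega> p1 d) - (k * Gf \<Omega> p2 d + L2ip \<Omega> p2 d)"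
    unfolding g l by (simp add: algebra_simps)
  then have "k * Gf \<Omega> d d + L2ip \<Omega> d d = 0" using r1 r2 by simp
  then have "d = (\<lambda>x. 0)" by (rule a_pd[OF k d0])
  then show ?thesis unfolding d_def by (auto simp: fun_eq_iff dest: fun_cong)
qed

end


locale femt = fem Tr \<Omega> for Tr :: "'a::euclidean_space set set" and \<Omega> +
  fixes tm :: "nat \<Rightarrow> real" and M :: nat and T :: real
  assumes mesh: "time_mesh tm M T"
begin

lemma M1: "M \<ge> 1" and tm0: "tm 0 = 0" and tmM: "tm M = T" and tmS: "\<And>m. m < M \<Longrightarrow> tm m < tm (Suc m)"
  using mesh unfolding time_mesh_def by auto

lemma tm_lt: "i < j \<Longrightarrow> j \<le> M \<Longrightarrow> tm i < tm j"
proof (induction j)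
  case 0 then show ?case by simp
next
  case (Suc j)
  show ?case
  proof (cases "i = j")
    case True then show ?thesis using tmS Suc.prems by simp
  next
    case False
    then have "tm i < tm j" using Suc by simp
    also have "tm j < tm (Suc j)" using tmS Suc.prems by simp
    finally show ?thesis .
  qed
qed

lemma tm_le: "i \<le> j \<Longrightarrow> j \<le> M \<Longrightarrow> tm i \<le> tm j"
  using tm_lt by (cases "i = j") (auto simp: less_le)

definition Iv :: "nat \<Rightarrow> real set" where "Iv m = {tm (m-1)<..tm m}"

lemma Iv_uniq: "m \<in> {1..M} \<Longrightarrow> m' \<in> {1..M} \<Longrightarrow> t \<in> Iv m \<Longrightarrow> t \<in> Iv m' \<Longrightarrow> m = m'"
proof (rule ccontr)
  assume a: "m \<in> {1..M}" "m' \<in> {1..M}" "t \<in> Iv m" "t \<in> Iv m'" "m \<noteq> m'"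
  have *: False if "i \<in> {1..M}" "j \<in> {1..M}" "t \<in> Iv i" "t \<in> Iv j" "i < j" for i j
  proof -
    have "tm i \<le> tm (j - 1)" using that by (intro tm_le) auto
    then show False using that by (auto simp: Iv_def)
  qed
  show False
  proof (cases "m < m'")
    case True then show ?thesis using * a by blast
  next
    case False then have "m' < m" using a(5) by simp
    then show ?thesis using * a by blast
  qed
qed

lemma tm_in: "m \<in> {1..M} \<Longrightarrow> tm m \<in> Iv m"
  unfolding Iv_def using tm_lt[of "m-1" m] by auto

lemma Iv_sub: "m \<in> {1..M} \<Longrightarrow> Iv m \<subseteq> {0<..tm M}"
proof -
  assume m: "m \<in> {1..M}"
  have "tm 0 \<le> tm (m-1)" "tm m \<le> tm M" using m by (auto intro!: tm_le)
  then show ?thesis unfolding Iv_def using tm0 by auto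
qed

lemma Iv_ex: "t \<in> {0<..tm M} \<Longrightarrow> \<exists>m\<in>{1..M}. t \<in> Iv m"
proof -
  assume t: "t \<in> {0<..tm M}"
  define m where "m = (LEAST m. t \<le> tm m)"
  have tM: "t \<le> tm M" using t by simp
  have 1: "t \<le> tm m" unfolding m_def by (rule LeastI[of _ M]) (rule tM)
  have 2: "m \<le> M" unfolding m_def by (rule Least_le) (rule tM)
  have 3: "m \<noteq> 0"
  proof
    assume "m = 0" then show False using 1 tm0 t by simp
  qed
  have "m - 1 < m" using 3 by simp
  then have "\<not> t \<le> tm (m-1)" using not_less_Least[of "m-1" "\<lambda>j. t \<le> tm j"] unfolding m_def by blast
  then have "t \<in> Iv m" using 1 unfolding Iv_def by simp
  moreover have "m \<in> {1..M}" using 2 3 by simp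
  ultimately show ?thesis by blast
qed

lemma idx: "m \<in> {1..M} \<Longrightarrow> t \<in> Iv m \<Longrightarrow> (LEAST j. t \<le> tm j) = m"
proof (rule Least_equality)
  assume m: "m \<in> {1..M}" and t: "t \<in> Iv m"
  show "t \<le> tm m" using t by (simp add: Iv_def)
  fix j assume j: "t \<le> tm j"
  show "m \<le> j"
  proof (rule ccontr)
    assume "\<not> m \<le> j"
    then have "tm j \<le> tm (m-1)" using m by (intro tm_le) auto
    then show False using j t by (auto simp: Iv_def)
  qed
qed

lemma pwc_out: "u \<in> pwc tm M V \<Longrightarrow> t \<notin> {0<..tm M} \<Longrightarrow> u t = (\<lambda>x. 0)"
  unfolding pwc_def by blast

lemma pwc_zero_t: "u \<in> pwc tm M V \<Longrightarrow> u 0 = (\<lambda>x. 0)"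
  by (rule pwc_out) auto

lemma pwc_at: "u \<in> pwc tm M V \<Longrightarrow> m \<in> {1..M} \<Longrightarrow> t \<in> Iv m \<Longrightarrow> u t = u (tm m)"
  unfolding pwc_def Iv_def by blast

lemma pwc_tm: "u \<in> pwc tm M V \<Longrightarrow> m \<in> {1..M} \<Longrightarrow> u (tm m) \<in> V"
  unfolding pwc_def by blast

lemma pwc_in: "u \<in> pwc tm M V \<Longrightarrow> (\<lambda>x. 0) \<in> V \<Longrightarrow> u t \<in> V"
proof -
  assume u: "u \<in> pwc tm M V" and z: "(\<lambda>x. 0) \<in> V"
  show ?thesis
  proof (cases "t \<in> {0<..tm M}")
    case True
    then obtain m where "m \<in> {1..M}" "t \<in> Iv m" using Iv_ex by blast
    then show ?thesis using pwc_at[OF u] pwc_tm[OF u] by simp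
  next
    case False then show ?thesis using pwc_out[OF u] z by simp
  qed
qed

lemma pwc_mono: "V \<subseteq> W \<Longrightarrow> u \<in> pwc tm M V \<Longrightarrow> u \<in> pwc tm M W"
  unfolding pwc_def by blast

lemma pwc_eq: "u \<in> pwc tm M V \<Longrightarrow> v \<in> pwc tm M W \<Longrightarrow> (\<And>m. m \<in> {1..M} \<Longrightarrow> u (tm m) = v (tm m)) \<Longrightarrow> u = v"
proof (rule ext)
  fix t assume u: "u \<in> pwc tm M V" and v: "v \<in> pwc tm M W" and e: "\<And>m. m \<in> {1..M} \<Longrightarrow> u (tm m) = v (tm m)"
  show "u t = v t"
  proof (cases "t \<in> {0<..tm M}")
    case True
    then obtain m where "m \<in> {1..M}" "t \<in> Iv m" using Iv_ex by blast
    then show ?thesis using pwc_at[OF u] pwc_at[OF v] e by simp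
  next
    case False then show ?thesis using pwc_out[OF u] pwc_out[OF v] by simp
  qed
qed

lemma B_exp: assumes v0: "v 0 = (\<lambda>x. 0)"
  shows "Bform tm M \<Omega> v w = (\<Sum>m=1..M. (tm m - tm (m-1)) * Gf \<Omega> (v (tm m)) (w (tm m))
             + L2ip \<Omega> (\<lambda>x. v (tm m) x - v (tm (m-1)) x) (w (tm m)))"
proof -
  have "(\<Sum>m=1..M. L2ip \<Omega> (\<lambda>x. v (tm m) x - v (tm (m-1)) x) (w (tm m)))
      = L2ip \<Omega> (\<lambda>x. v (tm 1) x - v (tm 0) x) (w (tm 1)) + (\<Sum>m=Suc 1..M. L2ip \<Omega> (\<lambda>x. v (tm m) x - v (tm (m-1)) x) (w (tm m)))"
    using M1 by (subst sum.atLeast_Suc_atMost) auto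
  also have "L2ip \<Omega> (\<lambda>x. v (tm 1) x - v (tm 0) x) (w (tm 1)) = L2ip \<Omega> (v (tm 1)) (w (tm 1))"
    using v0 tm0 by simp
  finally show ?thesis unfolding Bform_def Gf_def sum.distrib by (simp add: numeral_2_eq_2)
qed

definition sgl :: "nat \<Rightarrow> ('a \<Rightarrow> real) \<Rightarrow> real \<Rightarrow> 'a \<Rightarrow> real" where
  "sgl j \<zeta> = (\<lambda>t. if t \<in> Iv j then \<zeta> else (\<lambda>x. 0))"

lemma sgl_tm: "j \<in> {1..M} \<Longrightarrow> m \<in> {1..M} \<Longrightarrow> sgl j \<zeta> (tm m) = (if m = j then \<zeta> else (\<lambda>x. 0))"
  unfolding sgl_def using Iv_uniq tm_in by metis

lemma sgl_pwc: "j \<in> {1..M} \<Longrightarrow> \<zeta> \<in> V \<Longrightarrow> (\<lambda>x. 0) \<in> V \<Longrightarrow> sgl j \<zeta> \<in> pwc tm M V"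
proof -
  assume j: "j \<in> {1..M}" and z: "\<zeta> \<in> V" and o: "(\<lambda>x. 0) \<in> V"
  have "sgl j \<zeta> (tm m) \<in> V" if "m \<in> {1..M}" for m using sgl_tm[OF j that] z o by simp
  moreover have "sgl j \<zeta> t = sgl j \<zeta> (tm m)" if "m \<in> {1..M}" "t \<in> {tm (m-1)<..tm m}" for m t
  proof -
    have "t \<in> Iv m" using that(2) by (simp add: Iv_def)
    then have "(t \<in> Iv j) = (m = j)" using Iv_uniq[OF j that(1)] by blast
    then show ?thesis using sgl_tm[OF j that(1)] unfolding sgl_def by simp
  qed
  moreover have "sgl j \<zeta> t = (\<lambda>x. 0)" if "t \<notin> {0<..tm M}" for t
    using that Iv_sub[OF j] unfolding sgl_def by auto
  ultimately show ?thesis unfolding pwc_def by blast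
qed

lemma B_sgl: assumes v: "v \<in> pwc tm M (Vh Tr)" and j: "j \<in> {1..M}"
  shows "Bform tm M \<Omega> v (sgl j \<zeta>) = (tm j - tm (j-1)) * Gf \<Omega> (v (tm j)) \<zeta>
             + L2ip \<Omega> (\<lambda>x. v (tm j) x - v (tm (j-1)) x) \<zeta>"
proof -
  have "Bform tm M \<Omega> v (sgl j \<zeta>) = (\<Sum>m\<in>{1..M}. if m = j then (tm j - tm (j-1)) * Gf \<Omega> (v (tm j)) \<zeta>
             + L2ip \<Omega> (\<lambda>x. v (tm j) x - v (tm (j-1)) x) \<zeta> else 0)"
    unfolding B_exp[where v=v and w="sgl j \<zeta>", OF pwc_zero_t[OF v]]
    by (rule sum.cong) (auto simp: sgl_tm[OF j] G_zero L2_zero)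
  also have "\<dots> = (tm j - tm (j-1)) * Gf \<Omega> (v (tm j)) \<zeta> + L2ip \<Omega> (\<lambda>x. v (tm j) x - v (tm (j-1)) x) \<zeta>"
    using j by (simp add: sum.delta)
  finally show ?thesis .
qed

lemma vh_diff: "u \<in> Vh Tr \<Longrightarrow> v \<in> Vh Tr \<Longrightarrow> (\<lambda>x. u x - v x) \<in> Vh Tr"
  using vh_clo[of u v "-1"] by simp

lemma G_diff: "u \<in> Vh Tr \<Longrightarrow> v \<in> Vh Tr \<Longrightarrow> w \<in> Vh Tr \<Longrightarrow> Gf \<Omega> (\<lambda>x. u x - v x) w = Gf \<Omega> u w - Gf \<Omega> v w"
  using G_lin1[of u v w "-1"] by simp

lemma L2_diff: "u \<in> Vh Tr \<Longrightarrow> v \<in> Vh Tr \<Longrightarrow> w \<in> Vh Tr \<Longrightarrow> L2ip \<Omega> (\<lambda>x. u x - v x) w = L2ip \<Omega> u w - L2ip \<Omega> v w"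
  using L2_lin1[of u v w "-1"] by simp

lemma B_diff: assumes v1: "v1 \<in> pwc tm M (Vh Tr)" and v2: "v2 \<in> pwc tm M (Vh Tr)" and w: "w \<in> pwc tm M (Vh Tr)"
  shows "Bform tm M \<Omega> (\<lambda>t x. v1 t x - v2 t x) w = Bform tm M \<Omega> v1 w - Bform tm M \<Omega> v2 w"
proof -
  have i: "\<And>u t. u \<in> pwc tm M (Vh Tr) \<Longrightarrow> u t \<in> Vh Tr" using pwc_in vh_zero by blast
  have "(\<lambda>t x. v1 t x - v2 t x) 0 = (\<lambda>x. 0)" using pwc_zero_t[OF v1] pwc_zero_t[OF v2] by simp
  then have "Bform tm M \<Omega> (\<lambda>t x. v1 t x - v2 t x) w = (\<Sum>m=1..M. (tm m - tm (m-1)) * Gf \<Omega> (\<lambda>x. v1 (tm m) x - v2 (tm m) x) (w (tm m))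
             + L2ip \<Omega> (\<lambda>x. (v1 (tm m) x - v2 (tm m) x) - (v1 (tm (m-1)) x - v2 (tm (m-1)) x)) (w (tm m)))"
    by (rule B_exp)
  also have "\<dots> = (\<Sum>m=1..M. ((tm m - tm (m-1)) * Gf \<Omega> (v1 (tm m)) (w (tm m))
             + L2ip \<Omega> (\<lambda>x. v1 (tm m) x - v1 (tm (m-1)) x) (w (tm m)))
           - ((tm m - tm (m-1)) * Gf \<Omega> (v2 (tm m)) (w (tm m))
             + L2ip \<Omega> (\<lambda>x. v2 (tm m) x - v2 (tm (m-1)) x) (w (tm m))))"
  proof (rule sum.cong[OF refl])
    fix m
    have a: "v1 (tm m) \<in> Vh Tr" "v2 (tm m) \<in> Vh Tr" "v1 (tm (m-1)) \<in> Vh Tr" "v2 (tm (m-1)) \<in> Vh Tr" "w (tm m) \<in> Vh Tr"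
      using i v1 v2 w by blast+
    have e: "(\<lambda>x. (v1 (tm m) x - v2 (tm m) x) - (v1 (tm (m-1)) x - v2 (tm (m-1)) x))
           = (\<lambda>x. (\<lambda>x. v1 (tm m) x - v1 (tm (m-1)) x) x - (\<lambda>x. v2 (tm m) x - v2 (tm (m-1)) x) x)"
      by (simp add: fun_eq_iff algebra_simps)
    show "(tm m - tm (m-1)) * Gf \<Omega> (\<lambda>x. v1 (tm m) x - v2 (tm m) x) (w (tm m))
             + L2ip \<Omega> (\<lambda>x. (v1 (tm m) x - v2 (tm m) x) - (v1 (tm (m-1)) x - v2 (tm (m-1)) x)) (w (tm m))
          = ((tm m - tm (m-1)) * Gf \<Omega> (v1 (tm m)) (w (tm m))
             + L2ip \<Omega> (\<lambda>x. v1 (tm m) x - v1 (tm (m-1)) x) (w (tm m)))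
           - ((tm m - tm (m-1)) * Gf \<Omega> (v2 (tm m)) (w (tm m))
             + L2ip \<Omega> (\<lambda>x. v2 (tm m) x - v2 (tm (m-1)) x) (w (tm m)))"
      unfolding e G_diff[OF a(1,2,5)] L2_diff[OF vh_diff[OF a(1,3)] vh_diff[OF a(2,4)] a(5)]
      by (simp add: algebra_simps)
  qed
  also have "\<dots> = Bform tm M \<Omega> v1 w - Bform tm M \<Omega> v2 w"
    unfolding sum_subtractf B_exp[where v=v1 and w=w, OF pwc_zero_t[OF v1]] B_exp[where v=v2 and w=w, OF pwc_zero_t[OF v2]] ..
  finally show ?thesis .
qed

end


context femt begin

lemma br_zero: "bdry_restr \<Omega> (\<lambda>x. 0) = (\<lambda>x. 0)"
  unfolding bdry_restr_def by simp

lemma vhg_zero: "(\<lambda>x. 0) \<in> VhG Tr \<Omega>"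
  unfolding VhG_def by (rule image_eqI[where f="bdry_restr \<Omega>" and x="\<lambda>x. 0", OF br_zero[symmetric] vh_zero])

lemma step_eq:
  assumes p: "p \<in> pwc tm M (Vh Tr)" and B: "\<forall>\<psi>\<in>pwc tm M (Vh0 Tr \<Omega>). Bform tm M \<Omega> p \<psi> = 0"
    and j: "j \<in> {1..M}"
  shows "\<forall>\<zeta>\<in>Vh0 Tr \<Omega>. (tm j - tm (j-1)) * Gf \<Omega> (p (tm j)) \<zeta> + L2ip \<Omega> (\<lambda>x. p (tm j) x - p (tm (j-1)) x) \<zeta> = 0"
proof
  fix \<zeta> assume z: "\<zeta> \<in> Vh0 Tr \<Omega>"
  have "sgl j \<zeta> \<in> pwc tm M (Vh0 Tr \<Omega>)" by (rule sgl_pwc[OF j z vh0_zero])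
  then have "Bform tm M \<Omega> p (sgl j \<zeta>) = 0" using B by blast
  then show "(tm j - tm (j-1)) * Gf \<Omega> (p (tm j)) \<zeta> + L2ip \<Omega> (\<lambda>x. p (tm j) x - p (tm (j-1)) x) \<zeta> = 0"
    unfolding B_sgl[OF p j] .
qed

lemma pkh_uniq:
  assumes p1: "p1 \<in> pwc tm M (Vh Tr)" "\<forall>\<psi>\<in>pwc tm M (Vh0 Tr \<Omega>). Bform tm M \<Omega> p1 \<psi> = 0" "\<forall>t. bdry_restr \<Omega> (p1 t) = \<phi> t"
    and p2: "p2 \<in> pwc tm M (Vh Tr)" "\<forall>\<psi>\<in>pwc tm M (Vh0 Tr \<Omega>). Bform tm M \<Omega> p2 \<psi> = 0" "\<forall>t. bdry_restr \<Omega> (p2 t) = \<phi> t"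
  shows "p1 = p2"
proof -
  have "m \<le> M \<longrightarrow> p1 (tm m) = p2 (tm m)" for m
  proof (induction m)
    case 0 then show ?case using pwc_zero_t[OF p1(1)] pwc_zero_t[OF p2(1)] tm0 by simp
  next
    case (Suc m)
    show ?case
    proof
      assume sm: "Suc m \<le> M"
      then have Q: "p1 (tm m) = p2 (tm m)" using Suc.IH by simp
      have j: "Suc m \<in> {1..M}" using sm by simp
      have k: "tm (Suc m) - tm m > 0" using tm_lt[of m "Suc m"] sm by simp
      have Qv: "p1 (tm m) \<in> Vh Tr" by (rule pwc_in[OF p1(1) vh_zero])
      have a1: "p1 (tm (Suc m)) \<in> Vh Tr" by (rule pwc_in[OF p1(1) vh_zero])
      have a2: "p2 (tm (Suc m)) \<in> Vh Tr" by (rule pwc_in[OF p2(1) vh_zero])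
      have bd: "bdry_restr \<Omega> (p1 (tm (Suc m))) = bdry_restr \<Omega> (p2 (tm (Suc m)))"
        using p1(3) p2(3) by simp
      have e1: "\<forall>\<zeta>\<in>Vh0 Tr \<Omega>. (tm (Suc m) - tm m) * Gf \<Omega> (p1 (tm (Suc m))) \<zeta> + L2ip \<Omega> (\<lambda>x. p1 (tm (Suc m)) x - p1 (tm m) x) \<zeta> = 0"
        using step_eq[OF p1(1) p1(2) j] by simp
      have e2: "\<forall>\<zeta>\<in>Vh0 Tr \<Omega>. (tm (Suc m) - tm m) * Gf \<Omega> (p2 (tm (Suc m))) \<zeta> + L2ip \<Omega> (\<lambda>x. p2 (tm (Suc m)) x - p1 (tm m) x) \<zeta> = 0"
        using step_eq[OF p2(1) p2(2) j] Q by simp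
      show "p1 (tm (Suc m)) = p2 (tm (Suc m))" by (rule step_un[OF k Qv a1 a2 bd e1 e2])
    qed
  qed
  then show ?thesis using pwc_eq[OF p1(1) p2(1)] by simp
qed

lemma pkh_ex:
  assumes \<phi>: "\<phi> \<in> pwc tm M (VhG Tr \<Omega>)"
  shows "\<exists>p. p \<in> pwc tm M (Vh Tr) \<and> (\<forall>\<psi>\<in>pwc tm M (Vh0 Tr \<Omega>). Bform tm M \<Omega> p \<psi> = 0) \<and> (\<forall>t. bdry_restr \<Omega> (p t) = \<phi> t)"
proof -
  define nxt where "nxt m Q = (SOME p. p \<in> Vh Tr \<and> bdry_restr \<Omega> p = \<phi> (tm (Suc m)) \<and>
     (\<forall>\<zeta>\<in>Vh0 Tr \<Omega>. (tm (Suc m) - tm m) * Gf \<Omega> p \<zeta> + L2ip \<Omega> (\<lambda>x. p x - Q x) \<zeta> = 0))" for m Q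
  define P where "P = rec_nat (\<lambda>x. 0) nxt"
  have P0: "P 0 = (\<lambda>x. 0)" and PS: "\<And>m. P (Suc m) = nxt m (P m)" by (simp_all add: P_def)
  have Pp: "m \<le> M \<longrightarrow> P m \<in> Vh Tr \<and> (m \<ge> 1 \<longrightarrow> bdry_restr \<Omega> (P m) = \<phi> (tm m) \<and>
      (\<forall>\<zeta>\<in>Vh0 Tr \<Omega>. (tm m - tm (m-1)) * Gf \<Omega> (P m) \<zeta> + L2ip \<Omega> (\<lambda>x. P m x - P (m-1) x) \<zeta> = 0))" for m
  proof (induction m)
    case 0 then show ?case using P0 vh_zero by simp
  next
    case (Suc m)
    show ?case
    proof
      assume sm: "Suc m \<le> M"
      have Pm: "P m \<in> Vh Tr" using Suc.IH sm by simp
      have k: "tm (Suc m) - tm m > 0" using tm_lt[of m "Suc m"] sm by simp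
      have dat: "\<phi> (tm (Suc m)) \<in> VhG Tr \<Omega>" using pwc_tm[OF \<phi>] sm by simp
      have "\<exists>p. p \<in> Vh Tr \<and> bdry_restr \<Omega> p = \<phi> (tm (Suc m)) \<and>
         (\<forall>\<zeta>\<in>Vh0 Tr \<Omega>. (tm (Suc m) - tm m) * Gf \<Omega> p \<zeta> + L2ip \<Omega> (\<lambda>x. p x - P m x) \<zeta> = 0)"
        using step_ex[OF k Pm dat] by blast
      then have "nxt m (P m) \<in> Vh Tr \<and> bdry_restr \<Omega> (nxt m (P m)) = \<phi> (tm (Suc m)) \<and>
         (\<forall>\<zeta>\<in>Vh0 Tr \<Omega>. (tm (Suc m) - tm m) * Gf \<Omega> (nxt m (P m)) \<zeta> + L2ip \<Omega> (\<lambda>x. nxt m (P m) x - P m x) \<zeta> = 0)"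
        unfolding nxt_def by (rule someI_ex)
      then show "P (Suc m) \<in> Vh Tr \<and> (Suc m \<ge> 1 \<longrightarrow> bdry_restr \<Omega> (P (Suc m)) = \<phi> (tm (Suc m)) \<and>
      (\<forall>\<zeta>\<in>Vh0 Tr \<Omega>. (tm (Suc m) - tm (Suc m - 1)) * Gf \<Omega> (P (Suc m)) \<zeta> + L2ip \<Omega> (\<lambda>x. P (Suc m) x - P (Suc m - 1) x) \<zeta> = 0))"
        unfolding PS by simp
    qed
  qed
  define p where "p t = (if t \<in> {0<..tm M} then P (LEAST m. t \<le> tm m) else (\<lambda>x. 0))" for t
  have p_at: "p t = P m" if "m \<in> {1..M}" "t \<in> Iv m" for m t
    using Iv_sub[OF that(1)] idx[OF that] that(2) unfolding p_def by auto
  have p_tm: "p (tm m) = P m" if "m \<in> {1..M}" for m using p_at[OF that tm_in[OF that]] .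
  have p0: "p 0 = (\<lambda>x. 0)" unfolding p_def by simp
  have pm1: "p (tm (m-1)) = P (m-1)" if "m \<in> {1..M}" for m
  proof (cases "m = 1")
    case True then show ?thesis using p0 P0 tm0 by simp
  next
    case False
    then have "m - 1 \<in> {1..M}" using that by auto
    then show ?thesis by (rule p_tm)
  qed
  have p_pwc: "p \<in> pwc tm M (Vh Tr)"
    unfolding pwc_def
  proof (intro CollectI conjI ballI allI impI)
    fix m assume m: "m \<in> {1..M}"
    show "p (tm m) \<in> Vh Tr" using p_tm[OF m] Pp[of m] m by simp
    fix t assume "t \<in> {tm (m - 1)<..tm m}"
    then have "t \<in> Iv m" by (simp add: Iv_def)
    then show "p t = p (tm m)" using p_at[OF m] p_tm[OF m] by simp
  next
    fix t :: real assume "t \<notin> {0<..tm M}"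
    then show "p t = (\<lambda>x. 0)" unfolding p_def by (rule if_not_P)
  qed
  have pB: "\<forall>\<psi>\<in>pwc tm M (Vh0 Tr \<Omega>). Bform tm M \<Omega> p \<psi> = 0"
  proof
    fix \<psi> assume \<psi>: "\<psi> \<in> pwc tm M (Vh0 Tr \<Omega>)"
    show "Bform tm M \<Omega> p \<psi> = 0"
      unfolding B_exp[where v=p and w=\<psi>, OF p0]
    proof (rule sum.neutral, rule ballI)
      fix m assume m: "m \<in> {1..M}"
      have "\<psi> (tm m) \<in> Vh0 Tr \<Omega>" by (rule pwc_tm[OF \<psi> m])
      then show "(tm m - tm (m - 1)) * Gf \<Omega> (p (tm m)) (\<psi> (tm m)) + L2ip \<Omega> (\<lambda>x. p (tm m) x - p (tm (m - 1)) x) (\<psi> (tm m)) = 0"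
        using Pp[of m] m unfolding p_tm[OF m] pm1[OF m] by simp
    qed
  qed
  have pbd: "\<forall>t. bdry_restr \<Omega> (p t) = \<phi> t"
  proof
    fix t
    show "bdry_restr \<Omega> (p t) = \<phi> t"
    proof (cases "t \<in> {0<..tm M}")
      case True
      then obtain m where m: "m \<in> {1..M}" "t \<in> Iv m" using Iv_ex by blast
      then show ?thesis using p_at[OF m] pwc_at[OF \<phi> m] Pp[of m] by simp
    next
      case False
      then have "p t = (\<lambda>x. 0)" unfolding p_def by (rule if_not_P)
      then show ?thesis using pwc_out[OF \<phi> False] br_zero by simp
    qed
  qed
  show ?thesis using p_pwc pB pbd by blast
qed

lemma pkh_spec:
  assumes \<phi>: "\<phi> \<in> pwc tm M (VhG Tr \<Omega>)"
  shows "pkh Tr tm M \<Omega> \<phi> \<in> pwc tm M (Vh Tr)"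
    "\<forall>\<psi>\<in>pwc tm M (Vh0 Tr \<Omega>). Bform tm M \<Omega> (pkh Tr tm M \<Omega> \<phi>) \<psi> = 0"
    "\<forall>t. bdry_restr \<Omega> (pkh Tr tm M \<Omega> \<phi> t) = \<phi> t"
proof -
  have "\<exists>!p. p \<in> pwc tm M (Vh Tr) \<and> (\<forall>\<psi>\<in>pwc tm M (Vh0 Tr \<Omega>). Bform tm M \<Omega> p \<psi> = 0) \<and> (\<forall>t. bdry_restr \<Omega> (p t) = \<phi> t)"
  proof -
    obtain p where p: "p \<in> pwc tm M (Vh Tr) \<and> (\<forall>\<psi>\<in>pwc tm M (Vh0 Tr \<Omega>). Bform tm M \<Omega> p \<psi> = 0) \<and> (\<forall>t. bdry_restr \<Omega> (p t) = \<phi> t)"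
      using pkh_ex[OF \<phi>] by blast
    show ?thesis
    proof (rule ex1I[of _ p])
      show "p \<in> pwc tm M (Vh Tr) \<and> (\<forall>\<psi>\<in>pwc tm M (Vh0 Tr \<Omega>). Bform tm M \<Omega> p \<psi> = 0) \<and> (\<forall>t. bdry_restr \<Omega> (p t) = \<phi> t)"
        by (rule p)
      fix q assume "q \<in> pwc tm M (Vh Tr) \<and> (\<forall>\<psi>\<in>pwc tm M (Vh0 Tr \<Omega>). Bform tm M \<Omega> q \<psi> = 0) \<and> (\<forall>t. bdry_restr \<Omega> (q t) = \<phi> t)"
      then show "q = p" using p pkh_uniq[of q \<phi> p] by blast
    qed
  qed
  then have "pkh Tr tm M \<Omega> \<phi> \<in> pwc tm M (Vh Tr) \<and> (\<forall>\<psi>\<in>pwc tm M (Vh0 Tr \<Omega>). Bform tm M \<Omega> (pkh Tr tm M \<Omega> \<phi>) \<psi> = 0) \<and> (\<forall>t. bdry_restr \<Omega> (pkh Tr tm M \<Omega> \<phi> t) = \<phi> t)"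
    unfolding pkh_def by (rule theI')
  then show "pkh Tr tm M \<Omega> \<phi> \<in> pwc tm M (Vh Tr)"
    "\<forall>\<psi>\<in>pwc tm M (Vh0 Tr \<Omega>). Bform tm M \<Omega> (pkh Tr tm M \<Omega> \<phi>) \<psi> = 0"
    "\<forall>t. bdry_restr \<Omega> (pkh Tr tm M \<Omega> \<phi> t) = \<phi> t" by blast+
qed

end


context femt begin

lemma vh_borel: "v \<in> Vh Tr \<Longrightarrow> v \<in> borel_measurable borel"
proof -
  assume v: "v \<in> Vh Tr"
  have "(\<lambda>x. indicator (closure \<Omega>) x *\<^sub>R v x) \<in> borel_measurable borel"
    by (rule borel_measurable_continuous_on_indicator) (use vh_cont[OF v] in auto)
  moreover have "(\<lambda>x. indicator (closure \<Omega>) x *\<^sub>R v x) = v"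
    using vh_out[OF v] by (auto simp: indicator_def fun_eq_iff)
  ultimately show ?thesis by simp
qed

lemma pwc_bdd: "u \<in> pwc tm M (Vh Tr) \<Longrightarrow> \<exists>C\<ge>0. \<forall>t x. \<bar>u t x\<bar> \<le> C"
proof -
  assume u: "u \<in> pwc tm M (Vh Tr)"
  have ex: "\<forall>m\<in>{1..M}. \<exists>C. \<forall>x. \<bar>u (tm m) x\<bar> \<le> C" using vh_bdd pwc_tm[OF u] by blast
  obtain Cf where Cf: "\<forall>m\<in>{1..M}. \<forall>x. \<bar>u (tm m) x\<bar> \<le> Cf m" using bchoice[OF ex] by blast
  define C where "C = (\<Sum>m\<in>{1..M}. \<bar>Cf m\<bar>)"
  have C0: "C \<ge> 0" unfolding C_def by (simp add: sum_nonneg)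
  have "\<bar>u t x\<bar> \<le> C" for t x
  proof (cases "t \<in> {0<..tm M}")
    case True
    then obtain m where m: "m \<in> {1..M}" "t \<in> Iv m" using Iv_ex by blast
    have "\<bar>u t x\<bar> = \<bar>u (tm m) x\<bar>" using pwc_at[OF u m] by simp
    also have "\<dots> \<le> \<bar>Cf m\<bar>"
    proof -
      have "\<bar>u (tm m) x\<bar> \<le> Cf m" using Cf m(1) by blast
      then show ?thesis using abs_ge_self[of "Cf m"] by linarith
    qed
    also have "\<dots> \<le> C" unfolding C_def by (rule member_le_sum) (use m(1) in auto)
    finally show ?thesis .
  next
    case False then show ?thesis using pwc_out[OF u False] C0 by simp
  qed
  then show ?thesis using C0 by blast
qed

lemma pwc_meas: "u \<in> pwc tm M (Vh Tr) \<Longrightarrow> (\<lambda>q. u (fst q) (snd q)) \<in> borel_measurable (lebesgue :: (real \<times> 'a) measure)"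
proof -
  assume u: "u \<in> pwc tm M (Vh Tr)"
  have eq: "(\<lambda>q. u (fst q) (snd q)) = (\<lambda>q. \<Sum>m\<in>{1..M}. indicator (Iv m) (fst q) * u (tm m) (snd q))"
  proof
    fix q :: "real \<times> 'a"
    show "u (fst q) (snd q) = (\<Sum>m\<in>{1..M}. indicator (Iv m) (fst q) * u (tm m) (snd q))"
    proof (cases "fst q \<in> {0<..tm M}")
      case True
      then obtain m0 where m0: "m0 \<in> {1..M}" "fst q \<in> Iv m0" using Iv_ex by blast
      have "(\<Sum>m\<in>{1..M}. indicator (Iv m) (fst q) * u (tm m) (snd q))
          = (\<Sum>m\<in>{1..M}. if m = m0 then u (tm m0) (snd q) else 0)"
      proof (rule sum.cong[OF refl])
        fix m assume m: "m \<in> {1..M}"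
        have "(fst q \<in> Iv m) = (m = m0)" using Iv_uniq[OF m m0(1)] m0(2) by blast
        then show "indicator (Iv m) (fst q) * u (tm m) (snd q) = (if m = m0 then u (tm m0) (snd q) else 0)"
          by (auto simp: indicator_def)
      qed
      also have "\<dots> = u (tm m0) (snd q)" using m0(1) by (simp add: sum.delta)
      finally show ?thesis using pwc_at[OF u m0] by simp
    next
      case False
      have z: "indicator (Iv m) (fst q) * u (tm m) (snd q) = 0" if "m \<in> {1..M}" for m
        using Iv_sub[OF that] False by (auto simp: indicator_def)
      have "(\<Sum>m\<in>{1..M}. indicator (Iv m) (fst q) * u (tm m) (snd q)) = 0"
        by (rule sum.neutral) (use z in blast)
      then show ?thesis using pwc_out[OF u False] by simp
    qed
  qed
  have fstm: "(fst :: real \<times> 'a \<Rightarrow> real) \<in> borel_measurable borel"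
    by (intro borel_measurable_continuous_onI continuous_intros)
  have sndm: "(snd :: real \<times> 'a \<Rightarrow> 'a) \<in> borel \<rightarrow>\<^sub>M borel"
    by (intro borel_measurable_continuous_onI continuous_intros)
  have "(\<lambda>q. \<Sum>m\<in>{1..M}. indicator (Iv m) (fst q) * u (tm m) (snd q)) \<in> borel_measurable (borel :: (real \<times> 'a) measure)"
  proof (rule borel_measurable_sum, rule borel_measurable_times)
    fix m assume m: "m \<in> {1..M}"
    have "Iv m \<in> sets borel" unfolding Iv_def by simp
    then have im: "(indicator (Iv m) :: real \<Rightarrow> real) \<in> borel_measurable borel" by (rule borel_measurable_indicator)
    show "(\<lambda>q::real \<times> 'a. indicator (Iv m) (fst q) :: real) \<in> borel_measurable borel"
      using measurable_compose[OF fstm im] by (simp add: comp_def)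
    have um: "u (tm m) \<in> borel_measurable borel" by (rule vh_borel[OF pwc_tm[OF u m]])
    show "(\<lambda>q::real \<times> 'a. u (tm m) (snd q)) \<in> borel_measurable borel"
      using measurable_compose[OF sndm um] by (simp add: comp_def)
  qed
  then show ?thesis unfolding eq by (rule bl_meas)
qed

lemma abs_le_sq: "\<bar>a::real\<bar> \<le> 1 + a\<^sup>2"
proof (cases "\<bar>a\<bar> \<le> 1")
  case True then show ?thesis by (simp add: add_increasing2)
next
  case False
  then have "\<bar>a\<bar> * 1 \<le> \<bar>a\<bar> * \<bar>a\<bar>" by (intro mult_left_mono) auto
  also have "\<dots> = a\<^sup>2" by (simp add: power2_eq_square)
  finally show ?thesis by simp
qed

lemma gint:
  fixes g :: "real \<Rightarrow> 'a \<Rightarrow> real"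
  assumes gm: "set_borel_measurable lebesgue ({0<..<T} \<times> \<Omega>) (\<lambda>p. g (fst p) (snd p))"
    and gL: "set_integrable lebesgue ({0<..<T} \<times> \<Omega>) (\<lambda>p. (g (fst p) (snd p))\<^sup>2)"
    and u: "u \<in> pwc tm M (Vh Tr)"
  shows "set_integrable lebesgue ({0<..<T} \<times> \<Omega>) (\<lambda>p. g (fst p) (snd p) * u (fst p) (snd p))"
proof -
  define S where "S = {0<..<T} \<times> \<Omega>"
  have "S \<in> lmeasurable" unfolding S_def
  proof (rule lmeasurable_open)
    show "bounded ({0<..<T} \<times> \<Omega>)" by (rule bounded_Times[OF _ bdd]) simp
    show "open ({0<..<T} \<times> \<Omega>)" by (rule open_Times[OF _ opn]) simp
  qed
  then have S: "S \<in> sets lebesgue" "emeasure lebesgue S < \<infinity>" by (auto simp: fmeasurable_def)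
  obtain C where C: "C \<ge> 0" "\<forall>t x. \<bar>u t x\<bar> \<le> C" using pwc_bdd[OF u] by blast
  have one: "set_integrable lebesgue S (\<lambda>p. 1::real)"
    unfolding set_integrable_def using integrable_real_indicator[OF S] by simp
  have F: "set_integrable lebesgue S (\<lambda>p. C * (1 + (g (fst p) (snd p))\<^sup>2))"
    by (rule set_integrable_mult_right[OF set_integral_add(1)[OF one gL[folded S_def]]])
  have m1: "(\<lambda>p. indicator S p *\<^sub>R g (fst p) (snd p)) \<in> borel_measurable lebesgue"
    using gm unfolding set_borel_measurable_def S_def .
  have meas: "(\<lambda>p. indicator S p *\<^sub>R (g (fst p) (snd p) * u (fst p) (snd p))) \<in> borel_measurable lebesgue"
  proof -
    have "(\<lambda>p. (indicator S p *\<^sub>R g (fst p) (snd p)) * u (fst p) (snd p)) \<in> borel_measurable lebesgue"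
      by (rule borel_measurable_times[OF m1 pwc_meas[OF u]])
    then show ?thesis by (simp add: mult.assoc)
  qed
  have bnd: "norm (indicator S p *\<^sub>R (g (fst p) (snd p) * u (fst p) (snd p)))
        \<le> norm (indicator S p *\<^sub>R (C * (1 + (g (fst p) (snd p))\<^sup>2)))" for p
  proof (cases "p \<in> S")
    case True
    have "\<bar>g (fst p) (snd p) * u (fst p) (snd p)\<bar> = \<bar>g (fst p) (snd p)\<bar> * \<bar>u (fst p) (snd p)\<bar>"
      by (simp add: abs_mult)
    also have "\<dots> \<le> \<bar>g (fst p) (snd p)\<bar> * C" using C by (intro mult_left_mono) auto
    also have "\<dots> \<le> (1 + (g (fst p) (snd p))\<^sup>2) * C" using C abs_le_sq by (intro mult_right_mono) auto
    finally show ?thesis using True C by (simp add: mult.commute)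
  next
    case False then show ?thesis by simp
  qed
  have "integrable lebesgue (\<lambda>p. indicator S p *\<^sub>R (g (fst p) (snd p) * u (fst p) (snd p)))"
    by (rule Bochner_Integration.integrable_bound[OF F[unfolded set_integrable_def] meas]) (rule AE_I2, rule bnd)
  then show ?thesis unfolding set_integrable_def S_def .
qed

lemma L2T_diff:
  fixes g :: "real \<Rightarrow> 'a \<Rightarrow> real"
  assumes gm: "set_borel_measurable lebesgue ({0<..<T} \<times> \<Omega>) (\<lambda>p. g (fst p) (snd p))"
    and gL: "set_integrable lebesgue ({0<..<T} \<times> \<Omega>) (\<lambda>p. (g (fst p) (snd p))\<^sup>2)"
    and u: "u \<in> pwc tm M (Vh Tr)" and v: "v \<in> pwc tm M (Vh Tr)"
  shows "L2ipT T \<Omega> g (\<lambda>t x. u t x - v t x) = L2ipT T \<Omega> g u - L2ipT T \<Omega> g v"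
proof -
  have "L2ipT T \<Omega> g (\<lambda>t x. u t x - v t x) = (LINT p:({0<..<T} \<times> \<Omega>)|lebesgue.
      g (fst p) (snd p) * u (fst p) (snd p) - g (fst p) (snd p) * v (fst p) (snd p))"
    unfolding L2ipT_def by (simp add: right_diff_distrib)
  also have "\<dots> = L2ipT T \<Omega> g u - L2ipT T \<Omega> g v"
    unfolding L2ipT_def by (rule set_integral_diff(2)[OF gint[OF gm gL u] gint[OF gm gL v]])
  finally show ?thesis .
qed

lemma bdry_cong:
  assumes w: "w \<in> pwc tm M (VhG Tr \<Omega>)" and ab: "\<And>t x. x \<in> frontier \<Omega> \<Longrightarrow> a t x = b t x"
  shows "bdry_ipT T \<Omega> w a = bdry_ipT T \<Omega> w b"
proof -
  have *: "w t x * a t x = w t x * b t x" for t x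
  proof -
    have "w t \<in> VhG Tr \<Omega>" by (rule pwc_in[OF w vhg_zero])
    then obtain v where "w t = bdry_restr \<Omega> v" unfolding VhG_def by blast
    then show ?thesis using ab[of x t] by (cases "x \<in> frontier \<Omega>") (auto simp: bdry_restr_def)
  qed
  have "(\<lambda>x. w t x * a t x) = (\<lambda>x. w t x * b t x)" for t using * by (rule ext)
  then show ?thesis unfolding bdry_ipT_def by simp
qed

end


theorem proposition4p1:
  fixes \<Omega> :: "'a::euclidean_space set"
    and Tr :: "'a set set"
    and tm :: "nat \<Rightarrow> real" and M :: nat and T :: real
    and g z w :: "real \<Rightarrow> 'a \<Rightarrow> real"
  assumes dim: "DIM('a) = 2 \<or> DIM('a) = 3"
    and dom: "open \<Omega>" "\<Omega> \<noteq> {}" "bounded \<Omega>" "convex \<Omega>" "polytope (closure \<Omega>)"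
    and tri: "triangulation Tr \<Omega>"
    and mesh: "time_mesh tm M T"
    and g_meas: "set_borel_measurable lebesgue ({0<..<T} \<times> \<Omega>) (\<lambda>p. g (fst p) (snd p))"
    and g_L2: "set_integrable lebesgue ({0<..<T} \<times> \<Omega>) (\<lambda>p. (g (fst p) (snd p))\<^sup>2)"
    and z_X0: "z \<in> pwc tm M (Vh0 Tr \<Omega>)"
    and z_eq: "\<forall>\<phi>\<in>pwc tm M (Vh0 Tr \<Omega>). Bform tm M \<Omega> \<phi> z = L2ipT T \<Omega> g \<phi>"
    and w_XG: "w \<in> pwc tm M (VhG Tr \<Omega>)"
  shows "(\<forall>\<phi>\<in>pwc tm M (VhG Tr \<Omega>).
            bdry_ipT T \<Omega> w \<phi> = - L2ipT T \<Omega> g (pkh Tr tm M \<Omega> \<phi>))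
     \<longleftrightarrow> (\<forall>\<Phi>\<in>pwc tm M (Vh Tr).
            bdry_ipT T \<Omega> w \<Phi> = Bform tm M \<Omega> \<Phi> z - L2ipT T \<Omega> g \<Phi>)"
proof -
  interpret femt Tr \<Omega> tm M T
    by unfold_locales (use tri dom mesh in auto)
  have zV: "z \<in> pwc tm M (Vh Tr)" using z_X0 by (rule pwc_mono[rotated]) (auto simp: Vh0_def)
  show ?thesis
  proof
    assume A: "\<forall>\<phi>\<in>pwc tm M (VhG Tr \<Omega>). bdry_ipT T \<Omega> w \<phi> = - L2ipT T \<Omega> g (pkh Tr tm M \<Omega> \<phi>)"
    show "\<forall>\<Phi>\<in>pwc tm M (Vh Tr). bdry_ipT T \<Omega> w \<Phi> = Bform tm M \<Omega> \<Phi> z - L2ipT T \<Omega> g \<Phi>"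
    proof
      fix \<Phi> assume \<Phi>: "\<Phi> \<in> pwc tm M (Vh Tr)"
      define \<phi> where "\<phi> t = bdry_restr \<Omega> (\<Phi> t)" for t
      have \<phi>G: "\<phi> \<in> pwc tm M (VhG Tr \<Omega>)"
        unfolding pwc_def
      proof (intro CollectI conjI ballI allI impI)
        fix m assume m: "m \<in> {1..M}"
        show "\<phi> (tm m) \<in> VhG Tr \<Omega>" unfolding \<phi>_def VhG_def using pwc_tm[OF \<Phi> m] by blast
        fix t assume "t \<in> {tm (m - 1)<..tm m}"
        then have "t \<in> Iv m" by (simp add: Iv_def)
        then show "\<phi> t = \<phi> (tm m)" unfolding \<phi>_def using pwc_at[OF \<Phi> m] by simp
      next
        fix t :: real assume "t \<notin> {0<..tm M}"
        then show "\<phi> t = (\<lambda>x. 0)" unfolding \<phi>_def using pwc_out[OF \<Phi>] br_zero by simp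
      qed
      define p where "p = pkh Tr tm M \<Omega> \<phi>"
      have p: "p \<in> pwc tm M (Vh Tr)" "\<forall>\<psi>\<in>pwc tm M (Vh0 Tr \<Omega>). Bform tm M \<Omega> p \<psi> = 0"
        "\<forall>t. bdry_restr \<Omega> (p t) = \<phi> t"
        unfolding p_def by (rule pkh_spec[OF \<phi>G])+
      define d where "d = (\<lambda>t x. \<Phi> t x - p t x)"
      have d0: "d \<in> pwc tm M (Vh0 Tr \<Omega>)"
        unfolding pwc_def
      proof (intro CollectI conjI ballI allI impI)
        fix m assume m: "m \<in> {1..M}"
        have fr: "\<Phi> (tm m) x = p (tm m) x" if "x \<in> frontier \<Omega>" for x
          using fun_cong[OF p(3)[rule_format, of "tm m"], of x] that unfolding \<phi>_def bdry_restr_def by simp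
        show "d (tm m) \<in> Vh0 Tr \<Omega>"
          unfolding d_def Vh0_def using vh_diff[OF pwc_tm[OF \<Phi> m] pwc_tm[OF p(1) m]] fr by simp
        fix t assume "t \<in> {tm (m - 1)<..tm m}"
        then have "t \<in> Iv m" by (simp add: Iv_def)
        then show "d t = d (tm m)" unfolding d_def using pwc_at[OF \<Phi> m] pwc_at[OF p(1) m] by simp
      next
        fix t :: real assume "t \<notin> {0<..tm M}"
        then show "d t = (\<lambda>x. 0)" unfolding d_def using pwc_out[OF \<Phi>] pwc_out[OF p(1)] by simp
      qed
      have "Bform tm M \<Omega> d z = L2ipT T \<Omega> g d" using z_eq d0 by blast
      moreover have "Bform tm M \<Omega> d z = Bform tm M \<Omega> \<Phi> z - Bform tm M \<Omega> p z"
        unfolding d_def by (rule B_diff[OF \<Phi> p(1) zV])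
      moreover have "Bform tm M \<Omega> p z = 0" using p(2) z_X0 by blast
      moreover have "L2ipT T \<Omega> g d = L2ipT T \<Omega> g \<Phi> - L2ipT T \<Omega> g p"
        unfolding d_def by (rule L2T_diff[OF g_meas g_L2 \<Phi> p(1)])
      moreover have "bdry_ipT T \<Omega> w \<Phi> = bdry_ipT T \<Omega> w \<phi>"
      proof (rule bdry_cong[OF w_XG])
        fix t x assume "x \<in> frontier \<Omega>"
        then show "\<Phi> t x = \<phi> t x" unfolding \<phi>_def bdry_restr_def by simp
      qed
      moreover have "bdry_ipT T \<Omega> w \<phi> = - L2ipT T \<Omega> g p" unfolding p_def using A \<phi>G by blast
      ultimately show "bdry_ipT T \<Omega> w \<Phi> = Bform tm M \<Omega> \<Phi> z - L2ipT T \<Omega> g \<Phi>" by simp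
    qed
  next
    assume B: "\<forall>\<Phi>\<in>pwc tm M (Vh Tr). bdry_ipT T \<Omega> w \<Phi> = Bform tm M \<Omega> \<Phi> z - L2ipT T \<Omega> g \<Phi>"
    show "\<forall>\<phi>\<in>pwc tm M (VhG Tr \<Omega>). bdry_ipT T \<Omega> w \<phi> = - L2ipT T \<Omega> g (pkh Tr tm M \<Omega> \<phi>)"
    proof
      fix \<phi> assume \<phi>G: "\<phi> \<in> pwc tm M (VhG Tr \<Omega>)"
      define p where "p = pkh Tr tm M \<Omega> \<phi>"
      have p: "p \<in> pwc tm M (Vh Tr)" "\<forall>\<psi>\<in>pwc tm M (Vh0 Tr \<Omega>). Bform tm M \<Omega> p \<psi> = 0"
        "\<forall>t. bdry_restr \<Omega> (p t) = \<phi> t"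
        unfolding p_def by (rule pkh_spec[OF \<phi>G])+
      have "bdry_ipT T \<Omega> w \<phi> = bdry_ipT T \<Omega> w p"
      proof (rule bdry_cong[OF w_XG])
        fix t x assume "x \<in> frontier \<Omega>"
        then show "\<phi> t x = p t x" using fun_cong[OF p(3)[rule_format, of t], of x] unfolding bdry_restr_def by simp
      qed
      also have "\<dots> = Bform tm M \<Omega> p z - L2ipT T \<Omega> g p" using B p(1) by blast
      also have "Bform tm M \<Omega> p z = 0" using p(2) z_X0 by blast
      finally show "bdry_ipT T \<Omega> w \<phi> = - L2ipT T \<Omega> g (pkh Tr tm M \<Omega> \<phi>)" unfolding p_def by simp
    qed
  qed
qed


end
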